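(* Let $(M,F)$ be a Finsler manifold and let $\gamma=\gamma(s)$ be a curve parametrized by arc-length $s$ (so $F(\dot\gamma)=1$, $\dot\gamma=d\gamma/ds$) satisfying $$D^*_{\dot\gamma}D^*_{\dot\gamma}\dot\gamma+\tau(s)\dot\gamma=0,$$ where $\tau$ is a smooth function along $\gamma$. Then $\tau=g_{\dot\gamma}(D^*_{\dot\gamma}\dot\gamma,D^*_{\dot\gamma}\dot\gamma)$.
   Context: Coordinates $(x^i,y^i)$ on $TM$; $g_{ij}=\frac12\partial_{y^i}\partial_{y^j}(F^2)$ (inverse $g^{ij}$), $C_{ijk}=\frac12\partial_{y^k}g_{ij}$, $C^i_{jk}=g^{ir}C_{rjk}$, $G^i=\frac14g^{il}\{[F^2]_{x^ky^l}y^k-[F^2]_{x^l}\}$, $G^i_j=\partial_{y^j}G^i$, $\delta_i=\partial_{x^i}-G^r_i\partial_{y^r}$, ${}^*\Gamma^k_{ij}=\frac12g^{kl}(\delta_ig_{jl}+\delta_jg_{il}-\delta_lg_{ij})$. For a curve $\gamma$ and a vector field $W=W^k\partial_{x^k}$ along it, the Cartan $Y$-connection derivative ($Y$ any extension of $\dot\gamma$) is $(D^*_{\dot\gamma}W)^k=\frac{dW^k}{ds}+W^i\big[{}^*\Gamma^k_{ij}\dot\gamma^j+C^k_{ir}(\ddot\gamma^r+2G^r)\big]$, coefficients evaluated at $(\gamma,\dot\gamma)$; $g_{\dot\gamma}(U,W)=g_{ij}(\gamma,\dot\gamma)U^iW^j$. *)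

theory Defs
  imports "HOL-Analysis.Analysis"
begin

definition pdir :: "'a::euclidean_space \<Rightarrow> ('a \<Rightarrow> real) \<Rightarrow> 'a \<Rightarrow> real" where
  "pdir b f z = deriv (\<lambda>t. f (z + t *\<^sub>R b)) 0"

definition smooth_on :: "'a::euclidean_space set \<Rightarrow> ('a \<Rightarrow> real) \<Rightarrow> bool" where
  "smooth_on S f \<longleftrightarrow> open S \<and>
     (\<forall>bs. set bs \<subseteq> Basis \<longrightarrow>
        continuous_on S (foldr pdir bs f) \<and>
        (\<forall>z\<in>S. \<forall>b\<in>Basis. (\<lambda>t. foldr pdir bs f (z + t *\<^sub>R b)) differentiable (at 0)))"

definition vd :: "(real \<Rightarrow> 'a::real_normed_vector) \<Rightarrow> real \<Rightarrow> 'a" where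
  "vd f s = vector_derivative f (at s)"

definition smooth_curve :: "real set \<Rightarrow> (real \<Rightarrow> 'a::real_normed_vector) \<Rightarrow> bool" where
  "smooth_curve I c \<longleftrightarrow> open I \<and> (\<forall>k. \<forall>s\<in>I. (vd ^^ k) c differentiable (at s))"

section \<open>Coordinate calculus on TM (coordinates (x,y))\<close>

type_synonym 'n fin = "real^'n \<Rightarrow> real^'n \<Rightarrow> real"

definition dX :: "'n::finite \<Rightarrow> 'n fin \<Rightarrow> 'n fin" where
  "dX i f x y = deriv (\<lambda>t. f (x + t *\<^sub>R axis i 1) y) 0"

definition dY :: "'n::finite \<Rightarrow> 'n fin \<Rightarrow> 'n fin" where
  "dY i f x y = deriv (\<lambda>t. f x (y + t *\<^sub>R axis i 1)) 0"

definition Fsq :: "'n fin \<Rightarrow> 'n fin" where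
  "Fsq F x y = (F x y)\<^sup>2"

definition gF :: "'n fin \<Rightarrow> 'n::finite \<Rightarrow> 'n \<Rightarrow> 'n fin" where
  "gF F i j = (\<lambda>x y. 1/2 * dY i (dY j (Fsq F)) x y)"

definition gmat :: "'n fin \<Rightarrow> real^'n \<Rightarrow> real^'n \<Rightarrow> real^'n^'n::finite" where
  "gmat F x y = (\<chi> i j. gF F i j x y)"

definition ginv :: "'n fin \<Rightarrow> 'n::finite \<Rightarrow> 'n \<Rightarrow> 'n fin" where
  "ginv F i j x y = matrix_inv (gmat F x y) $ i $ j"

definition Clow :: "'n fin \<Rightarrow> 'n::finite \<Rightarrow> 'n \<Rightarrow> 'n \<Rightarrow> 'n fin" where
  "Clow F i j k = (\<lambda>x y. 1/2 * dY k (gF F i j) x y)"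

definition Cup :: "'n fin \<Rightarrow> 'n::finite \<Rightarrow> 'n \<Rightarrow> 'n \<Rightarrow> 'n fin" where
  "Cup F i j k = (\<lambda>x y. \<Sum>r\<in>UNIV. ginv F i r x y * Clow F r j k x y)"

definition Gs :: "'n fin \<Rightarrow> 'n::finite \<Rightarrow> 'n fin" where
  "Gs F i = (\<lambda>x y. 1/4 * (\<Sum>l\<in>UNIV. ginv F i l x y *
      ((\<Sum>k\<in>UNIV. dY l (dX k (Fsq F)) x y * y $ k) - dX l (Fsq F) x y)))"

definition Gn :: "'n fin \<Rightarrow> 'n::finite \<Rightarrow> 'n \<Rightarrow> 'n fin" where
  "Gn F i j = dY j (Gs F i)"

definition delta :: "'n fin \<Rightarrow> 'n::finite \<Rightarrow> 'n fin \<Rightarrow> 'n fin" where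
  "delta F i h = (\<lambda>x y. dX i h x y - (\<Sum>r\<in>UNIV. Gn F r i x y * dY r h x y))"

definition Gam :: "'n fin \<Rightarrow> 'n::finite \<Rightarrow> 'n \<Rightarrow> 'n \<Rightarrow> 'n fin" where
  "Gam F k i j = (\<lambda>x y. 1/2 * (\<Sum>l\<in>UNIV. ginv F k l x y *
      (delta F i (gF F j l) x y + delta F j (gF F i l) x y - delta F l (gF F i j) x y)))"

text \<open>Cartan Y-connection derivative of W along the curve c, Y an extension of c'.\<close>
definition covD :: "'n fin \<Rightarrow> (real \<Rightarrow> real^'n::finite) \<Rightarrow> (real \<Rightarrow> real^'n) \<Rightarrow> real \<Rightarrow> real^'n" where
  "covD F c W s = (\<chi> k. vd (\<lambda>t. W t $ k) s +
     (\<Sum>i\<in>UNIV. W s $ i *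
        ((\<Sum>j\<in>UNIV. Gam F k i j (c s) (vd c s) * vd c s $ j) +
         (\<Sum>r\<in>UNIV. Cup F k i r (c s) (vd c s) *
              (vd (vd c) s $ r + 2 * Gs F r (c s) (vd c s))))))"

definition gform :: "'n fin \<Rightarrow> real^'n \<Rightarrow> real^'n \<Rightarrow> real^'n \<Rightarrow> real^'n::finite \<Rightarrow> real" where
  "gform F x y U W = (\<Sum>i\<in>UNIV. \<Sum>j\<in>UNIV. gF F i j x y * U $ i * W $ j)"

section \<open>Finsler structure on a coordinate domain U of R^n\<close>

definition finsler_chart :: "(real^'n::finite) set \<Rightarrow> 'n fin \<Rightarrow> bool" where
  "finsler_chart U F \<longleftrightarrow> open U \<and>
     (\<forall>x\<in>U. \<forall>y. F x y \<ge> 0) \<and>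
     smooth_on (U \<times> (UNIV - {0})) (\<lambda>z. F (fst z) (snd z)) \<and>
     (\<forall>x\<in>U. \<forall>y. \<forall>c>0. F x (c *\<^sub>R y) = c * F x y) \<and>
     (\<forall>x\<in>U. \<forall>y. y \<noteq> 0 \<longrightarrow>
        (\<forall>v. v \<noteq> 0 \<longrightarrow> (\<Sum>i\<in>UNIV. \<Sum>j\<in>UNIV. gF F i j x y * v $ i * v $ j) > 0))"

end

theory Submission
  imports Defs
begin
lemma eventually_line_in:
  fixes z b :: "'a::real_normed_vector"
  assumes "open S" "z \<in> S"
  shows "\<forall>\<^sub>F t in nhds (0::real). z + t *\<^sub>R b \<in> S"
proof -
  have "open ((\<lambda>t::real. z + t *\<^sub>R b) -` S)"
    by (rule continuous_open_vimage[OF assms(1)]) (intro continuous_intros)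
  moreover have "0 \<in> (\<lambda>t::real. z + t *\<^sub>R b) -` S" using assms by simp
  ultimately have "\<forall>\<^sub>F t in nhds (0::real). t \<in> (\<lambda>t::real. z + t *\<^sub>R b) -` S"
    by (rule eventually_nhds_in_open)
  then show ?thesis by simp
qed

lemma pdir_local:
  assumes "open S" "z \<in> S" "\<forall>w\<in>S. f w = g w"
  shows "pdir b f z = pdir b g z"
  unfolding pdir_def
  apply (rule deriv_cong_ev)
   apply (rule eventually_mono[OF eventually_line_in[OF assms(1,2), of b]])
  using assms(3) by auto

lemma foldr_local:
  assumes "open S" "\<forall>w\<in>S. f w = g w"
  shows "\<forall>w\<in>S. foldr pdir bs f w = foldr pdir bs g w"
proof (induction bs)
  case Nil then show ?case using assms(2) by simp
next
  case (Cons a bs)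
  show ?case using pdir_local[OF assms(1) _ Cons.IH] by simp
qed

lemma diff_ev:
  assumes "(\<phi>::real\<Rightarrow>real) differentiable at 0" "\<forall>\<^sub>F t in nhds 0. \<phi> t = \<psi> t"
  shows "\<psi> differentiable at 0"
proof -
  from assms(1) have "DERIV \<phi> 0 :> deriv \<phi> 0" by (simp add: DERIV_deriv_iff_real_differentiable)
  then have "DERIV \<psi> 0 :> deriv \<phi> 0" using DERIV_cong_ev[OF refl assms(2) refl] by simp
  then have "DERIV \<psi> 0 :> deriv \<psi> 0" using DERIV_imp_deriv by metis
  then show ?thesis by (simp add: DERIV_deriv_iff_real_differentiable)
qed

definition smk :: "'a::euclidean_space set \<Rightarrow> nat \<Rightarrow> ('a \<Rightarrow> real) \<Rightarrow> bool" where
  "smk S n f \<longleftrightarrow> (\<forall>bs. set bs \<subseteq> Basis \<and> length bs \<le> n \<longrightarrow>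
        continuous_on S (foldr pdir bs f) \<and>
        (\<forall>z\<in>S. \<forall>b\<in>Basis. (\<lambda>t. foldr pdir bs f (z + t *\<^sub>R b)) differentiable (at 0)))"

lemma smooth_on_smk: "smooth_on S f \<longleftrightarrow> open S \<and> (\<forall>n. smk S n f)"
proof
  assume A: "smooth_on S f"
  show "open S \<and> (\<forall>n. smk S n f)"
  proof (intro conjI allI)
    show "open S" using A unfolding smooth_on_def by simp
    fix n show "smk S n f" unfolding smk_def
    proof (intro allI impI)
      fix bs :: "'a list" assume "set bs \<subseteq> Basis \<and> length bs \<le> n"
      then have "set bs \<subseteq> Basis" by simp
      from A[unfolded smooth_on_def] this
      show "continuous_on S (foldr pdir bs f) \<and>
        (\<forall>z\<in>S. \<forall>b\<in>Basis. (\<lambda>t. foldr pdir bs f (z + t *\<^sub>R b)) differentiable (at 0))" by simp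
    qed
  qed
next
  assume A: "open S \<and> (\<forall>n. smk S n f)"
  show "smooth_on S f" unfolding smooth_on_def
  proof (intro conjI allI impI)
    show "open S" using A by simp
    fix bs :: "'a list" assume bs: "set bs \<subseteq> Basis"
    have "smk S (length bs) f" using A by simp
    from this[unfolded smk_def, rule_format, of bs] bs
    show "continuous_on S (foldr pdir bs f)" 
       "(\<forall>z\<in>S. \<forall>b\<in>Basis. (\<lambda>t. foldr pdir bs f (z + t *\<^sub>R b)) differentiable (at 0))" by simp_all
  qed
qed

lemma smk_0: "smk S 0 f \<longleftrightarrow> continuous_on S f \<and>
        (\<forall>z\<in>S. \<forall>b\<in>Basis. (\<lambda>t. f (z + t *\<^sub>R b)) differentiable (at 0))"
proof -
  have "length bs \<le> 0 \<longleftrightarrow> bs = []" for bs :: "'a list" by simp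
  then show ?thesis unfolding smk_def by simp
qed

lemma smk_Suc: "smk S (Suc n) f \<longleftrightarrow> smk S 0 f \<and> (\<forall>b\<in>Basis. smk S n (pdir b f))"
proof
  assume A: "smk S (Suc n) f"
  show "smk S 0 f \<and> (\<forall>b\<in>Basis. smk S n (pdir b f))"
  proof
    show "smk S 0 f" using A[unfolded smk_def, rule_format, of "[]"] unfolding smk_0 by simp
    show "\<forall>b\<in>Basis. smk S n (pdir b f)"
    proof (intro ballI, unfold smk_def, intro allI impI)
      fix b :: 'a and bs :: "'a list" assume b: "b \<in> Basis" and bs: "set bs \<subseteq> Basis \<and> length bs \<le> n"
      have bs': "set (bs @ [b]) \<subseteq> Basis \<and> length (bs @ [b]) \<le> Suc n" using b bs by auto
      have X: "continuous_on S (foldr pdir (bs @ [b]) f) \<and>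
        (\<forall>z\<in>S. \<forall>c\<in>Basis. (\<lambda>t. foldr pdir (bs @ [b]) f (z + t *\<^sub>R c)) differentiable (at 0))"
        using A[unfolded smk_def, rule_format, OF bs'] .
      then show "continuous_on S (foldr pdir bs (pdir b f)) \<and>
        (\<forall>z\<in>S. \<forall>c\<in>Basis. (\<lambda>t. foldr pdir bs (pdir b f) (z + t *\<^sub>R c)) differentiable (at 0))"
        by simp
    qed
  qed
next
  assume A: "smk S 0 f \<and> (\<forall>b\<in>Basis. smk S n (pdir b f))"
  show "smk S (Suc n) f"
    unfolding smk_def
  proof (intro allI impI)
    fix bs :: "'a list" assume bs: "set bs \<subseteq> Basis \<and> length bs \<le> Suc n"
    show "continuous_on S (foldr pdir bs f) \<and>
        (\<forall>z\<in>S. \<forall>b\<in>Basis. (\<lambda>t. foldr pdir bs f (z + t *\<^sub>R b)) differentiable (at 0))"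
    proof (cases bs rule: rev_exhaust)
      case Nil then show ?thesis using A unfolding smk_0 by simp
    next
      case (snoc cs c)
      then have cs: "set cs \<subseteq> Basis \<and> length cs \<le> n" and c: "c \<in> Basis" using bs by auto
      have "smk S n (pdir c f)" using A c by blast
      from this[unfolded smk_def, rule_format, OF cs]
      show ?thesis unfolding snoc by simp
    qed
  qed
qed

lemma smk_mono': 
  assumes "smk S n f" "m \<le> n" shows "smk S m f"
  unfolding smk_def
proof (intro allI impI)
  fix bs :: "'a list" assume "set bs \<subseteq> Basis \<and> length bs \<le> m"
  then have "set bs \<subseteq> Basis \<and> length bs \<le> n" using assms(2) by simp
  from assms(1)[unfolded smk_def, rule_format, OF this]
  show "continuous_on S (foldr pdir bs f) \<and>
        (\<forall>z\<in>S. \<forall>b\<in>Basis. (\<lambda>t. foldr pdir bs f (z + t *\<^sub>R b)) differentiable (at 0))" .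
qed

lemma smk_mono: "smk S (Suc n) f \<Longrightarrow> smk S n f"
  using smk_mono' by (metis le_SucI order_refl)

lemma smk_local:
  assumes "open S" "\<forall>w\<in>S. f w = g w" "smk S n f"
  shows "smk S n g"
  unfolding smk_def
proof (intro allI impI conjI ballI)
  fix bs :: "'a list" assume bs: "set bs \<subseteq> Basis \<and> length bs \<le> n"
  have eq: "\<forall>w\<in>S. foldr pdir bs f w = foldr pdir bs g w" using foldr_local[OF assms(1,2)] .
  have cd: "continuous_on S (foldr pdir bs f) \<and>
        (\<forall>z\<in>S. \<forall>b\<in>Basis. (\<lambda>t. foldr pdir bs f (z + t *\<^sub>R b)) differentiable (at 0))"
    using assms(3)[unfolded smk_def, rule_format, OF bs] .
  show "continuous_on S (foldr pdir bs g)" 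
    using continuous_on_cong[OF refl, of S "foldr pdir bs f" "foldr pdir bs g"] eq cd by simp
  fix z b :: 'a assume z: "z \<in> S" and b: "b \<in> Basis"
  have d: "(\<lambda>t. foldr pdir bs f (z + t *\<^sub>R b)) differentiable (at 0)" using cd z b by simp
  have ev: "\<forall>\<^sub>F t in nhds 0. foldr pdir bs f (z + t *\<^sub>R b) = foldr pdir bs g (z + t *\<^sub>R b)"
    using eventually_line_in[OF assms(1) z, of b] 
  proof (rule eventually_mono)
    fix t :: real assume "z + t *\<^sub>R b \<in> S"
    then show "foldr pdir bs f (z + t *\<^sub>R b) = foldr pdir bs g (z + t *\<^sub>R b)" using eq by simp
  qed
  show "(\<lambda>t. foldr pdir bs g (z + t *\<^sub>R b)) differentiable (at 0)"
    by (rule diff_ev[OF d ev])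
qed

lemma pdir_DERIV:
  "(\<lambda>t. f (z + t *\<^sub>R b)) differentiable at 0 \<Longrightarrow>
   ((\<lambda>t. f (z + t *\<^sub>R b)) has_real_derivative pdir b f z) (at 0)"
  unfolding pdir_def by (simp add: DERIV_deriv_iff_real_differentiable)

lemma pdir_eqI:
  "((\<lambda>t. f (z + t *\<^sub>R b)) has_real_derivative D) (at 0) \<Longrightarrow> pdir b f z = D"
  unfolding pdir_def by (rule DERIV_imp_deriv)

lemma smk_add:
  fixes S :: "'a::euclidean_space set"
  assumes "open S"
  shows "smk S n f \<Longrightarrow> smk S n g \<Longrightarrow> smk S n (\<lambda>w. f w + g w)"
proof (induction n arbitrary: f g)
  case 0
  then show ?case unfolding smk_0 by (auto intro: continuous_on_add differentiable_add)
next
  case (Suc n)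
  have f0: "smk S 0 f" and g0: "smk S 0 g" using smk_mono'[OF Suc.prems(1), of 0] smk_mono'[OF Suc.prems(2), of 0] by simp_all
  have b0: "smk S 0 (\<lambda>w. f w + g w)" 
    using smk_mono'[OF Suc.IH[OF smk_mono[OF Suc.prems(1)] smk_mono[OF Suc.prems(2)]], of 0] by simp
  show ?case unfolding smk_Suc
  proof (intro conjI ballI b0)
    fix b :: 'a assume b: "b \<in> Basis"
    have fb: "smk S n (pdir b f)" and gb: "smk S n (pdir b g)" using Suc.prems b unfolding smk_Suc by auto
    have eq: "\<forall>w\<in>S. pdir b f w + pdir b g w = pdir b (\<lambda>w. f w + g w) w"
    proof
      fix w assume w: "w \<in> S"
      have df: "(\<lambda>t. f (w + t *\<^sub>R b)) differentiable at 0" using f0 w b unfolding smk_0 by simp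
      have dg: "(\<lambda>t. g (w + t *\<^sub>R b)) differentiable at 0" using g0 w b unfolding smk_0 by simp
      show "pdir b f w + pdir b g w = pdir b (\<lambda>w. f w + g w) w"
        by (rule sym, rule pdir_eqI, rule DERIV_add[OF pdir_DERIV[OF df] pdir_DERIV[OF dg]])
    qed
    show "smk S n (pdir b (\<lambda>w. f w + g w))"
      by (rule smk_local[OF assms eq Suc.IH[OF fb gb]])
  qed
qed

lemma smk_const:
  fixes S :: "'a::euclidean_space set"
  shows "smk S n (\<lambda>w. c)"
proof (induction n arbitrary: c)
  case 0
  then show ?case unfolding smk_0 by simp
next
  case (Suc n)
  have "pdir b (\<lambda>w. c) = (\<lambda>w. 0)" for b :: 'a
    by (rule ext, rule pdir_eqI) simp
  then show ?case unfolding smk_Suc using Suc.IH[of 0] by (simp add: smk_0)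
qed

lemma smk_mult:
  fixes S :: "'a::euclidean_space set"
  assumes "open S"
  shows "smk S n f \<Longrightarrow> smk S n g \<Longrightarrow> smk S n (\<lambda>w. f w * g w)"
proof (induction n arbitrary: f g)
  case 0
  then show ?case unfolding smk_0 by (auto intro: continuous_on_mult differentiable_mult)
next
  case (Suc n)
  have f0: "smk S 0 f" and g0: "smk S 0 g" using smk_mono'[OF Suc.prems(1), of 0] smk_mono'[OF Suc.prems(2), of 0] by simp_all
  have fn: "smk S n f" and gn: "smk S n g" using smk_mono[OF Suc.prems(1)] smk_mono[OF Suc.prems(2)] by simp_all
  have b0: "smk S 0 (\<lambda>w. f w * g w)" 
    using smk_mono'[OF Suc.IH[OF fn gn], of 0] by simp
  show ?case unfolding smk_Suc
  proof (intro conjI ballI b0)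
    fix b :: 'a assume b: "b \<in> Basis"
    have fb: "smk S n (pdir b f)" and gb: "smk S n (pdir b g)" using Suc.prems b unfolding smk_Suc by auto
    have eq: "\<forall>w\<in>S. pdir b f w * g w + f w * pdir b g w = pdir b (\<lambda>w. f w * g w) w"
    proof
      fix w assume w: "w \<in> S"
      have df: "(\<lambda>t. f (w + t *\<^sub>R b)) differentiable at 0" using f0 w b unfolding smk_0 by simp
      have dg: "(\<lambda>t. g (w + t *\<^sub>R b)) differentiable at 0" using g0 w b unfolding smk_0 by simp
      show "pdir b f w * g w + f w * pdir b g w = pdir b (\<lambda>w. f w * g w) w"
        by (rule sym, rule pdir_eqI, rule DERIV_mult'[OF pdir_DERIV[OF df] pdir_DERIV[OF dg], THEN DERIV_cong])
          (simp add: algebra_simps)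
    qed
    have "smk S n (\<lambda>w. pdir b f w * g w + f w * pdir b g w)"
      by (rule smk_add[OF assms Suc.IH[OF fb gn] Suc.IH[OF fn gb]])
    then show "smk S n (pdir b (\<lambda>w. f w * g w))"
      by (rule smk_local[OF assms eq])
  qed
qed

lemma smk_inverse:
  fixes S :: "'a::euclidean_space set"
  assumes "open S"
  shows "smk S n f \<Longrightarrow> \<forall>w\<in>S. f w \<noteq> 0 \<Longrightarrow> smk S n (\<lambda>w. inverse (f w))"
proof (induction n arbitrary: f)
  case 0
  then show ?case unfolding smk_0
  proof (intro conjI ballI)
    show "continuous_on S (\<lambda>w. inverse (f w))" using 0 unfolding smk_0 by (auto intro: continuous_on_inverse)
    fix z b assume z: "z \<in> S" and b: "(b::'a) \<in> Basis"
    have df: "(\<lambda>t. f (z + t *\<^sub>R b)) differentiable at 0" using 0 z b unfolding smk_0 by simp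
    show "(\<lambda>t. inverse (f (z + t *\<^sub>R b))) differentiable at 0"
      using DERIV_inverse_fun[OF pdir_DERIV[OF df]] 0(2) z real_differentiable_def by fastforce
  qed
next
  case (Suc n)
  have f0: "smk S 0 f" using smk_mono'[OF Suc.prems(1), of 0] by simp
  have fn: "smk S n f" using smk_mono[OF Suc.prems(1)] by simp
  have i: "smk S n (\<lambda>w. inverse (f w))" using Suc.IH[OF fn Suc.prems(2)] .
  have b0: "smk S 0 (\<lambda>w. inverse (f w))" using smk_mono'[OF i, of 0] by simp
  show ?case unfolding smk_Suc
  proof (intro conjI ballI b0)
    fix b :: 'a assume b: "b \<in> Basis"
    have fb: "smk S n (pdir b f)" using Suc.prems b unfolding smk_Suc by auto
    have eq: "\<forall>w\<in>S. (-1) * pdir b f w * (inverse (f w) * inverse (f w)) = pdir b (\<lambda>w. inverse (f w)) w"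
    proof
      fix w assume w: "w \<in> S"
      have df: "(\<lambda>t. f (w + t *\<^sub>R b)) differentiable at 0" using f0 w b unfolding smk_0 by simp
      show "(-1) * pdir b f w * (inverse (f w) * inverse (f w)) = pdir b (\<lambda>w. inverse (f w)) w"
        by (rule sym, rule pdir_eqI, rule DERIV_inverse_fun[OF pdir_DERIV[OF df], THEN DERIV_cong])
          (use Suc.prems(2) w in \<open>simp_all add: power2_eq_square\<close>)
    qed
    have "smk S n (\<lambda>w. (-1) * pdir b f w * (inverse (f w) * inverse (f w)))"
      using smk_mult[OF assms smk_mult[OF assms smk_const[of S n "-1"] fb] smk_mult[OF assms i i]] by (simp only:)
    then show "smk S n (pdir b (\<lambda>w. inverse (f w)))"
      by (rule smk_local[OF assms eq])
  qed
qed

lemma lin_DERIV: "((\<lambda>t. (z + t *\<^sub>R b) \<bullet> c) has_real_derivative b \<bullet> c) (at t0)"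
proof -
  have e: "(\<lambda>t. (z + t *\<^sub>R b) \<bullet> c) = (\<lambda>t. z \<bullet> c + t * (b \<bullet> c))" by (simp add: inner_add_left)
  show ?thesis unfolding e by (auto intro!: derivative_eq_intros)
qed

lemma smk_inner:
  fixes S :: "'a::euclidean_space set"
  shows "smk S n (\<lambda>w. w \<bullet> c)"
proof -
  have c0: "smk S 0 (\<lambda>w. w \<bullet> c)" unfolding smk_0
  proof (intro conjI ballI)
    show "continuous_on S (\<lambda>w. w \<bullet> c)" by (intro continuous_intros)
    fix z b :: 'a
    show "(\<lambda>t. (z + t *\<^sub>R b) \<bullet> c) differentiable at 0"
      using lin_DERIV real_differentiable_def by blast
  qed
  show ?thesis
  proof (cases n)
    case 0
    show ?thesis unfolding 0 by (rule c0)
  next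
    case (Suc m)
    have "pdir b (\<lambda>w. w \<bullet> c) = (\<lambda>w. b \<bullet> c)" for b :: 'a
      by (rule ext, rule pdir_eqI, rule lin_DERIV)
    then show ?thesis unfolding Suc smk_Suc using c0
      by (simp only: ball_simps) (intro conjI ballI smk_const, simp)
  qed
qed

lemma smooth_open: "smooth_on S f \<Longrightarrow> open S" unfolding smooth_on_smk by simp

lemma smooth_add: "smooth_on S f \<Longrightarrow> smooth_on S g \<Longrightarrow> smooth_on S (\<lambda>w. f w + g w)"
  unfolding smooth_on_smk using smk_add by blast

lemma smooth_mult: "smooth_on S f \<Longrightarrow> smooth_on S g \<Longrightarrow> smooth_on S (\<lambda>w. f w * g w)"
  unfolding smooth_on_smk using smk_mult by blast

lemma smooth_const: "open S \<Longrightarrow> smooth_on S (\<lambda>w. c)"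
  unfolding smooth_on_smk using smk_const by blast

lemma smooth_inner: "open S \<Longrightarrow> smooth_on S (\<lambda>w. w \<bullet> c)"
  unfolding smooth_on_smk using smk_inner by blast

lemma smooth_inverse: "smooth_on S f \<Longrightarrow> \<forall>w\<in>S. f w \<noteq> 0 \<Longrightarrow> smooth_on S (\<lambda>w. inverse (f w))"
  unfolding smooth_on_smk using smk_inverse by blast

lemma smooth_local: "smooth_on S f \<Longrightarrow> \<forall>w\<in>S. f w = g w \<Longrightarrow> smooth_on S g"
  unfolding smooth_on_smk using smk_local by blast

lemma smooth_pdir: "smooth_on S f \<Longrightarrow> b \<in> Basis \<Longrightarrow> smooth_on S (pdir b f)"
  unfolding smooth_on_smk using smk_Suc by blast

lemma smooth_cmult: "smooth_on S f \<Longrightarrow> smooth_on S (\<lambda>w. c * f w)"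
  using smooth_mult[OF smooth_const[OF smooth_open] ] by blast

lemma smooth_diff: 
  assumes "smooth_on S f" "smooth_on S g" shows "smooth_on S (\<lambda>w. f w - g w)"
proof -
  have "smooth_on S (\<lambda>w. f w + (-1) * g w)" using smooth_add[OF assms(1) smooth_cmult[OF assms(2)]] .
  then show ?thesis by simp
qed

lemma smooth_divide: 
  assumes "smooth_on S f" "smooth_on S g" "\<forall>w\<in>S. g w \<noteq> 0" shows "smooth_on S (\<lambda>w. f w / g w)"
proof -
  have "smooth_on S (\<lambda>w. f w * inverse (g w))" using smooth_mult[OF assms(1) smooth_inverse[OF assms(2,3)]] .
  then show ?thesis by (simp add: divide_inverse)
qed

lemma smooth_sum:
  assumes "finite A" "open S" "\<And>i. i \<in> A \<Longrightarrow> smooth_on S (f i)"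
  shows "smooth_on S (\<lambda>w. \<Sum>i\<in>A. f i w)"
  using assms
proof (induction A rule: finite_induct)
  case empty then show ?case using smooth_const[OF assms(2), of 0] by simp
next
  case (insert a A)
  have "smooth_on S (\<lambda>w. f a w + (\<Sum>i\<in>A. f i w))"
    by (rule smooth_add) (use insert in auto)
  then show ?case using insert(1,2) by simp
qed

lemma smooth_prod:
  assumes "finite A" "open S" "\<And>i. i \<in> A \<Longrightarrow> smooth_on S (f i)"
  shows "smooth_on S (\<lambda>w. \<Prod>i\<in>A. f i w)"
  using assms
proof (induction A rule: finite_induct)
  case empty then show ?case using smooth_const[OF assms(2), of 1] by simp
next
  case (insert a A)
  have "smooth_on S (\<lambda>w. f a w * (\<Prod>i\<in>A. f i w))"
    by (rule smooth_mult) (use insert in auto)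
  then show ?case using insert(1,2) by simp
qed

lemma smooth_continuous: "smooth_on S f \<Longrightarrow> continuous_on S f"
  unfolding smooth_on_def by (metis empty_subsetI foldr.simps(1) id_apply list.set(1))

lemma smooth_DERIV:
  assumes "smooth_on S f" "w \<in> S" "b \<in> Basis"
  shows "((\<lambda>t. f (w + t *\<^sub>R b)) has_real_derivative pdir b f w) (at 0)"
proof -
  have "(\<lambda>t. f (w + t *\<^sub>R b)) differentiable at 0"
    using assms(1)[unfolded smooth_on_def] assms(2,3) by (metis empty_subsetI foldr.simps(1) id_apply list.set(1))
  then show ?thesis by (rule pdir_DERIV)
qed

lemma mvt_line:
  fixes \<phi> \<phi>' :: "real \<Rightarrow> real"
  assumes "\<And>t. \<bar>t\<bar> \<le> \<bar>a\<bar> \<Longrightarrow> (\<phi> has_real_derivative \<phi>' t) (at t)"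
  shows "\<exists>t. \<bar>t\<bar> \<le> \<bar>a\<bar> \<and> \<phi> a - \<phi> 0 = a * \<phi>' t"
proof (cases "0 \<le> a")
  case True
  have "\<exists>x\<in>{0..a}. \<phi> a - \<phi> 0 = (\<lambda>h. \<phi>' x * h) (a - 0)"
  proof (rule mvt_very_simple[OF True])
    fix x assume "0 \<le> x" "x \<le> a"
    then have "(\<phi> has_real_derivative \<phi>' x) (at x)" using assms by simp
    then show "(\<phi> has_derivative (\<lambda>h. \<phi>' x * h)) (at x within {0..a})"
      unfolding has_field_derivative_def by (rule has_derivative_at_withinI)
  qed
  then obtain x where "x \<in> {0..a}" "\<phi> a - \<phi> 0 = a * \<phi>' x" by (auto simp: mult.commute)
  then show ?thesis by (intro exI[of _ x]) auto
next
  case False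
  have "\<exists>x\<in>{a..0}. \<phi> 0 - \<phi> a = (\<lambda>h. \<phi>' x * h) (0 - a)"
  proof (rule mvt_very_simple)
    show "a \<le> 0" using False by simp
    fix x assume "a \<le> x" "x \<le> 0"
    then have "(\<phi> has_real_derivative \<phi>' x) (at x)" using assms by simp
    then show "(\<phi> has_derivative (\<lambda>h. \<phi>' x * h)) (at x within {a..0})"
      unfolding has_field_derivative_def by (rule has_derivative_at_withinI)
  qed
  then obtain x where "x \<in> {a..0}" "\<phi> 0 - \<phi> a = (0 - a) * \<phi>' x" by (auto simp: mult.commute)
  then show ?thesis by (intro exI[of _ x]) (auto simp: algebra_simps)
qed

lemma frechet_partials:
  fixes f :: "'a::euclidean_space \<Rightarrow> real"
  assumes S: "open S" "z \<in> S"
   and D: "\<And>w b. w \<in> S \<Longrightarrow> b \<in> Basis \<Longrightarrow> ((\<lambda>t. f (w + t *\<^sub>R b)) has_real_derivative D b w) (at 0)"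
   and C: "\<And>b. b \<in> Basis \<Longrightarrow> continuous_on S (D b)"
  shows "(f has_derivative (\<lambda>v. \<Sum>b\<in>Basis. (v \<bullet> b) * D b z)) (at z)"
proof -
  define Q where "Q B \<longleftrightarrow> (\<forall>e>0. \<exists>d>0. \<forall>v. (\<forall>b\<in>Basis-B. v \<bullet> b = 0) \<longrightarrow> norm v < d \<longrightarrow>
      \<bar>f (z+v) - f z - (\<Sum>b\<in>B. (v \<bullet> b) * D b z)\<bar> \<le> e * norm v)" for B
  have "Q Basis"
    using finite_Basis subset_refl
  proof (induction rule: finite_subset_induct')
    case empty
    have "\<forall>v::'a. (\<forall>b\<in>Basis-{}. v \<bullet> b = 0) \<longrightarrow> v = 0" by (simp add: euclidean_all_zero_iff)
    then show ?case unfolding Q_def by (intro allI impI exI[of _ "1::real"]) auto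
  next
    case (insert c B)
    show ?case unfolding Q_def
    proof (intro allI impI)
      fix e :: real assume e: "e > 0"
      obtain d1 where d1: "d1 > 0" and d1P: "\<And>v. (\<forall>b\<in>Basis-B. v \<bullet> b = 0) \<Longrightarrow> norm v < d1 \<Longrightarrow>
          \<bar>f (z+v) - f z - (\<Sum>b\<in>B. (v \<bullet> b) * D b z)\<bar> \<le> (e/2) * norm v"
        using insert.IH[unfolded Q_def, rule_format, of "e/2"] e by auto
      have "continuous (at z) (D c)" using C[OF insert.hyps(2)] S continuous_on_eq_continuous_at by blast
      then obtain d2' where d2': "d2' > 0" "\<And>w. dist w z < d2' \<Longrightarrow> dist (D c w) (D c z) < e/2"
        unfolding continuous_at_eps_delta using e by (metis half_gt_zero)
      obtain d3 where d3: "d3 > 0" "ball z d3 \<subseteq> S" using S open_contains_ball by blast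
      define d where "d = min d1 (min d2' d3)"
      have d: "d > 0" using d1 d2' d3 unfolding d_def by simp
      show "\<exists>d>0. \<forall>v. (\<forall>b\<in>Basis - insert c B. v \<bullet> b = 0) \<longrightarrow> norm v < d \<longrightarrow>
          \<bar>f (z + v) - f z - (\<Sum>b\<in>insert c B. v \<bullet> b * D b z)\<bar> \<le> e * norm v"
      proof (intro exI[of _ d] conjI allI impI d)
        fix v :: 'a assume v0: "\<forall>b\<in>Basis - insert c B. v \<bullet> b = 0" and vd: "norm v < d"
        define a where "a = v \<bullet> c"
        define v' where "v' = v - a *\<^sub>R c"
        have c: "c \<in> Basis" "c \<notin> B" using insert.hyps by auto
        have v'b: "v' \<bullet> b = (if b = c then 0 else v \<bullet> b)" if "b \<in> Basis" for b
          using that c unfolding v'_def a_def by (auto simp: inner_diff_left inner_not_same_Basis)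
        have v'0: "\<forall>b\<in>Basis-B. v' \<bullet> b = 0" using v0 v'b by auto
        have nv': "norm v' \<le> norm v" by (rule norm_le_componentwise) (simp add: v'b)
        have IH: "\<bar>f (z+v') - f z - (\<Sum>b\<in>B. (v' \<bullet> b) * D b z)\<bar> \<le> (e/2) * norm v'"
          using d1P[OF v'0] nv' vd unfolding d_def by simp
        have sB: "(\<Sum>b\<in>B. (v' \<bullet> b) * D b z) = (\<Sum>b\<in>B. (v \<bullet> b) * D b z)"
          by (rule sum.cong) (use v'b c insert.hyps(3) in \<open>auto simp: subset_iff\<close>)
        have na: "\<bar>a\<bar> \<le> norm v" unfolding a_def by (rule Basis_le_norm[OF c(1)])
        define \<phi> where "\<phi> t = f (z + v' + t *\<^sub>R c)" for t
        have close: "norm (v' + t *\<^sub>R c) \<le> norm v" if "\<bar>t\<bar> \<le> \<bar>a\<bar>" for t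
          by (rule norm_le_componentwise)
             (use that c in \<open>auto simp: inner_add_left v'b a_def inner_not_same_Basis\<close>)
        have der: "(\<phi> has_real_derivative D c (z + v' + t *\<^sub>R c)) (at t)" if "\<bar>t\<bar> \<le> \<bar>a\<bar>" for t
        proof -
          have nn: "norm (z - (z + v' + t *\<^sub>R c)) = norm (v' + t *\<^sub>R c)"
            by (metis add.assoc add_diff_cancel_left' norm_minus_commute)
          have w: "z + v' + t *\<^sub>R c \<in> S" using close[OF that] vd d3 nn unfolding d_def
            by (auto simp: dist_norm subset_iff)
          have "((\<lambda>u. f ((z + v' + t *\<^sub>R c) + u *\<^sub>R c)) has_real_derivative D c (z + v' + t *\<^sub>R c)) (at 0)"
            by (rule D[OF w c(1)])
          moreover have "(\<lambda>u. f ((z + v' + t *\<^sub>R c) + u *\<^sub>R c)) = (\<lambda>u. \<phi> (u + t))"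
            unfolding \<phi>_def by (auto simp: algebra_simps)
          ultimately show ?thesis using DERIV_shift[of \<phi> _ 0 t] by simp
        qed
        obtain t where t: "\<bar>t\<bar> \<le> \<bar>a\<bar>" "\<phi> a - \<phi> 0 = a * D c (z + v' + t *\<^sub>R c)"
          using mvt_line[of a \<phi>, OF der] by blast
        have "dist (z + v' + t *\<^sub>R c) z < d2'" using close[OF t(1)] vd unfolding d_def by (simp add: dist_norm)
        then have "\<bar>D c (z + v' + t *\<^sub>R c) - D c z\<bar> < e/2" using d2' by (simp add: dist_real_def)
        then have "\<bar>a\<bar> * \<bar>D c (z + v' + t *\<^sub>R c) - D c z\<bar> \<le> \<bar>a\<bar> * (e/2)"
          by (intro mult_left_mono) simp_all
        also have "\<dots> \<le> norm v * (e/2)" using na e by (simp add: mult_right_mono)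
        finally have M: "\<bar>\<phi> a - \<phi> 0 - a * D c z\<bar> \<le> (e/2) * norm v"
          using t(2) by (simp add: abs_mult right_diff_distrib[symmetric] mult.commute)
        have zv: "z + v = z + v' + a *\<^sub>R c" unfolding v'_def by simp
        have eq: "f (z + v) - f z - (\<Sum>b\<in>insert c B. v \<bullet> b * D b z) =
            (\<phi> a - \<phi> 0 - a * D c z) + (f (z+v') - f z - (\<Sum>b\<in>B. (v' \<bullet> b) * D b z))"
          unfolding sB using insert.hyps(1) c(2) by (simp add: \<phi>_def zv a_def)
        have "\<bar>f (z + v) - f z - (\<Sum>b\<in>insert c B. v \<bullet> b * D b z)\<bar> \<le> (e/2) * norm v + (e/2) * norm v'"
          unfolding eq using M IH by linarith
        also have "\<dots> \<le> e * norm v"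
        proof -
          have "e * norm v' \<le> e * norm v" using nv' e by (intro mult_left_mono) simp_all
          then show ?thesis by linarith
        qed
        finally show "\<bar>f (z + v) - f z - (\<Sum>b\<in>insert c B. v \<bullet> b * D b z)\<bar> \<le> e * norm v" .
      qed
    qed
  qed
  show ?thesis unfolding has_derivative_at_alt
  proof (intro conjI allI impI)
    show "bounded_linear (\<lambda>v. \<Sum>b\<in>Basis. v \<bullet> b * D b z)"
      by (intro bounded_linear_intros)
    fix e :: real assume "e > 0"
    then obtain d where "d > 0" and dP: "\<And>v. norm v < d \<Longrightarrow>
        \<bar>f (z+v) - f z - (\<Sum>b\<in>Basis. (v \<bullet> b) * D b z)\<bar> \<le> e * norm v"
      using \<open>Q Basis\<close>[unfolded Q_def] by force
    show "\<exists>d>0. \<forall>y. norm (y - z) < d \<longrightarrow>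
          norm (f y - f z - (\<Sum>b\<in>Basis. (y - z) \<bullet> b * D b z)) \<le> e * norm (y - z)"
      using dP[of "_ - z"] \<open>d > 0\<close> by (intro exI[of _ d]) auto
  qed
qed

lemma line_DERIV:
  assumes "smooth_on S g" "w + s *\<^sub>R u \<in> S" "u \<in> Basis"
  shows "((\<lambda>s. g (w + s *\<^sub>R u)) has_real_derivative pdir u g (w + s *\<^sub>R u)) (at s)"
proof -
  have "((\<lambda>t. g ((w + s *\<^sub>R u) + t *\<^sub>R u)) has_real_derivative pdir u g (w + s *\<^sub>R u)) (at 0)"
    by (rule smooth_DERIV[OF assms])
  moreover have "(\<lambda>t. g ((w + s *\<^sub>R u) + t *\<^sub>R u)) = (\<lambda>t. (\<lambda>s. g (w + s *\<^sub>R u)) (t + s))"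
    by (auto simp: algebra_simps)
  ultimately show ?thesis using DERIV_shift[of "\<lambda>s. g (w + s *\<^sub>R u)" _ 0 s] by simp
qed

lemma two_step:
  assumes g: "smooth_on S g" and u: "u \<in> Basis" and v: "v \<in> Basis" and h: "h > 0"
   and sq: "\<And>s t. \<bar>s\<bar> \<le> h \<Longrightarrow> \<bar>t\<bar> \<le> h \<Longrightarrow> z + s *\<^sub>R u + t *\<^sub>R v \<in> S"
  shows "\<exists>s t. \<bar>s\<bar> \<le> h \<and> \<bar>t\<bar> \<le> h \<and>
     g (z + h *\<^sub>R u + h *\<^sub>R v) - g (z + h *\<^sub>R u) - g (z + h *\<^sub>R v) + g z
       = h * h * pdir v (pdir u g) (z + s *\<^sub>R u + t *\<^sub>R v)"
proof -
  define \<phi> where "\<phi> s = g ((z + h *\<^sub>R v) + s *\<^sub>R u) - g (z + s *\<^sub>R u)" for s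
  have der: "(\<phi> has_real_derivative (pdir u g ((z + h *\<^sub>R v) + s *\<^sub>R u) - pdir u g (z + s *\<^sub>R u))) (at s)"
    if "\<bar>s\<bar> \<le> \<bar>h\<bar>" for s
  proof -
    have p1: "(z + h *\<^sub>R v) + s *\<^sub>R u \<in> S" using sq[of s h] that h by (simp add: algebra_simps)
    have p2: "z + s *\<^sub>R u \<in> S" using sq[of s 0] that h by simp
    show ?thesis unfolding \<phi>_def[abs_def]
      by (rule DERIV_diff[OF line_DERIV[OF g p1 u] line_DERIV[OF g p2 u]])
  qed
  obtain s1 where s1: "\<bar>s1\<bar> \<le> \<bar>h\<bar>"
    "\<phi> h - \<phi> 0 = h * (pdir u g ((z + h *\<^sub>R v) + s1 *\<^sub>R u) - pdir u g (z + s1 *\<^sub>R u))"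
    using mvt_line[of h \<phi>, OF der] by blast
  define \<psi> where "\<psi> t = pdir u g ((z + s1 *\<^sub>R u) + t *\<^sub>R v)" for t
  have gu: "smooth_on S (pdir u g)" by (rule smooth_pdir[OF g u])
  have derx: "(\<psi> has_real_derivative pdir v (pdir u g) ((z + s1 *\<^sub>R u) + t *\<^sub>R v)) (at t)"
    if "\<bar>t\<bar> \<le> \<bar>h\<bar>" for t
  proof -
    have p: "(z + s1 *\<^sub>R u) + t *\<^sub>R v \<in> S" using sq[of s1 t] that s1 h by simp
    show ?thesis unfolding \<psi>_def[abs_def] by (rule line_DERIV[OF gu p v])
  qed
  obtain t1 where t1: "\<bar>t1\<bar> \<le> \<bar>h\<bar>"
    "\<psi> h - \<psi> 0 = h * pdir v (pdir u g) ((z + s1 *\<^sub>R u) + t1 *\<^sub>R v)"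
    using mvt_line[of h \<psi>, OF derx] by blast
  have e1: "\<psi> h - \<psi> 0 = pdir u g ((z + h *\<^sub>R v) + s1 *\<^sub>R u) - pdir u g (z + s1 *\<^sub>R u)"
    unfolding \<psi>_def by (simp add: algebra_simps)
  have e2: "\<phi> h - \<phi> 0 = g (z + h *\<^sub>R u + h *\<^sub>R v) - g (z + h *\<^sub>R u) - g (z + h *\<^sub>R v) + g z"
    unfolding \<phi>_def by (simp add: algebra_simps)
  have "g (z + h *\<^sub>R u + h *\<^sub>R v) - g (z + h *\<^sub>R u) - g (z + h *\<^sub>R v) + g z = \<phi> h - \<phi> 0"
    using e2 by simp
  also have "\<dots> = h * (\<psi> h - \<psi> 0)" using s1(2) e1 by simp
  also have "\<dots> = h * (h * pdir v (pdir u g) ((z + s1 *\<^sub>R u) + t1 *\<^sub>R v))" using t1(2) by simp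
  finally have "g (z + h *\<^sub>R u + h *\<^sub>R v) - g (z + h *\<^sub>R u) - g (z + h *\<^sub>R v) + g z
       = h * h * pdir v (pdir u g) (z + s1 *\<^sub>R u + t1 *\<^sub>R v)" by (simp add: mult.assoc)
  then show ?thesis using s1(1) t1(1) h by (intro exI[of _ s1] exI[of _ t1]) simp
qed

lemma clairaut:
  assumes f: "smooth_on S f" and z: "z \<in> S" and a: "a \<in> Basis" and b: "b \<in> Basis"
  shows "pdir a (pdir b f) z = pdir b (pdir a f) z"
proof (rule ccontr)
  assume ne: "pdir a (pdir b f) z \<noteq> pdir b (pdir a f) z"
  define A where "A = pdir b (pdir a f)"
  define B where "B = pdir a (pdir b f)"
  define \<delta> where "\<delta> = \<bar>A z - B z\<bar>"
  have \<delta>: "\<delta> > 0" using ne unfolding \<delta>_def A_def B_def by simp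
  have S: "open S" using smooth_open[OF f] .
  obtain r where r: "r > 0" "ball z r \<subseteq> S" using S z open_contains_ball by blast
  have cA: "continuous (at z) A" unfolding A_def
    using smooth_continuous[OF smooth_pdir[OF smooth_pdir[OF f a] b]] S z continuous_on_eq_continuous_at by blast
  have cB: "continuous (at z) B" unfolding B_def
    using smooth_continuous[OF smooth_pdir[OF smooth_pdir[OF f b] a]] S z continuous_on_eq_continuous_at by blast
  obtain d1 where d1: "d1 > 0" "\<And>w. dist w z < d1 \<Longrightarrow> dist (A w) (A z) < \<delta>/2"
    using cA \<delta> unfolding continuous_at_eps_delta by (metis half_gt_zero)
  obtain d2 where d2: "d2 > 0" "\<And>w. dist w z < d2 \<Longrightarrow> dist (B w) (B z) < \<delta>/2"
    using cB \<delta> unfolding continuous_at_eps_delta by (metis half_gt_zero)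
  define h where "h = min (r/4) (min (d1/4) (d2/4))"
  have h: "h > 0" using r d1 d2 unfolding h_def by simp
  have near: "norm (s *\<^sub>R u + t *\<^sub>R v) \<le> 2 * h" if "\<bar>s\<bar> \<le> h" "\<bar>t\<bar> \<le> h" "u \<in> Basis" "v \<in> Basis" for s t u v
  proof -
    have "norm (s *\<^sub>R u + t *\<^sub>R v) \<le> norm (s *\<^sub>R u) + norm (t *\<^sub>R v)" by (rule norm_triangle_ineq)
    also have "\<dots> = \<bar>s\<bar> + \<bar>t\<bar>" using that by simp
    finally show ?thesis using that by simp
  qed
  have dz: "dist (z + s *\<^sub>R u + t *\<^sub>R v) z \<le> 2 * h" if "\<bar>s\<bar> \<le> h" "\<bar>t\<bar> \<le> h" "u \<in> Basis" "v \<in> Basis" for s t u v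
    using near[OF that] by (simp add: dist_norm add.assoc)
  have sq: "z + s *\<^sub>R u + t *\<^sub>R v \<in> S" if "\<bar>s\<bar> \<le> h" "\<bar>t\<bar> \<le> h" "u \<in> Basis" "v \<in> Basis" for s t u v
  proof -
    have "dist z (z + s *\<^sub>R u + t *\<^sub>R v) < r" using dz[OF that] r h unfolding h_def by (simp add: dist_commute)
    then show ?thesis using r by auto
  qed
  obtain s1 t1 where st1: "\<bar>s1\<bar> \<le> h" "\<bar>t1\<bar> \<le> h"
     "f (z + h *\<^sub>R a + h *\<^sub>R b) - f (z + h *\<^sub>R a) - f (z + h *\<^sub>R b) + f z
       = h * h * A (z + s1 *\<^sub>R a + t1 *\<^sub>R b)"
    using two_step[OF f a b h sq[OF _ _ a b]] unfolding A_def by blast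
  obtain s2 t2 where st2: "\<bar>s2\<bar> \<le> h" "\<bar>t2\<bar> \<le> h"
     "f (z + h *\<^sub>R b + h *\<^sub>R a) - f (z + h *\<^sub>R b) - f (z + h *\<^sub>R a) + f z
       = h * h * B (z + s2 *\<^sub>R b + t2 *\<^sub>R a)"
    using two_step[OF f b a h sq[OF _ _ b a]] unfolding B_def by blast
  have E: "f (z + h *\<^sub>R b + h *\<^sub>R a) = f (z + h *\<^sub>R a + h *\<^sub>R b)"
    by (rule arg_cong[where f=f]) (simp add: algebra_simps)
  have "h * h * A (z + s1 *\<^sub>R a + t1 *\<^sub>R b) = h * h * B (z + s2 *\<^sub>R b + t2 *\<^sub>R a)"
    using st1(3) st2(3) E by linarith
  then have AB: "A (z + s1 *\<^sub>R a + t1 *\<^sub>R b) = B (z + s2 *\<^sub>R b + t2 *\<^sub>R a)" using h by simp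
  have hd: "2 * h < d1" "2 * h < d2" using d1 d2 unfolding h_def by auto
  have "dist (A (z + s1 *\<^sub>R a + t1 *\<^sub>R b)) (A z) < \<delta>/2"
    by (rule d1(2)) (use dz[OF st1(1,2) a b] hd in linarith)
  moreover have "dist (B (z + s2 *\<^sub>R b + t2 *\<^sub>R a)) (B z) < \<delta>/2"
    by (rule d2(2)) (use dz[OF st2(1,2) b a] hd in linarith)
  ultimately have "\<bar>A z - B z\<bar> < \<delta>" using AB unfolding dist_real_def by linarith
  then show False unfolding \<delta>_def by simp
qed

definition L :: "'n::finite fin \<Rightarrow> ((real^'n) \<times> (real^'n) \<Rightarrow> real)" where
  "L h = (\<lambda>z. h (fst z) (snd z))"

lemma Basis_real_vec: "(Basis :: (real^'n) set) = range (\<lambda>i. axis i 1)"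
  by (auto simp: Basis_vec_def)

lemma sum_Basis_real_vec: "(\<Sum>b\<in>(Basis::(real^'n) set). f b) = (\<Sum>i\<in>UNIV. f (axis i 1))"
  unfolding Basis_real_vec by (subst sum.reindex) (auto simp: inj_on_def axis_eq_axis)

lemma sum_Basis_prod_real:
  "(\<Sum>b\<in>(Basis::('a::euclidean_space \<times> 'b::euclidean_space) set). f b) = (\<Sum>u\<in>Basis. f (u,0)) + (\<Sum>v\<in>Basis. f (0,v))"
proof -
  have "inj_on (\<lambda>u. (u::'a, 0::'b)) Basis" "inj_on (\<lambda>u. (0::'a, u::'b)) Basis"
    by (auto intro!: inj_onI)
  thus ?thesis
    unfolding Basis_prod_def
    by (subst sum.union_disjoint) (auto simp: Basis_prod_def sum.reindex)
qed

lemma ex_Basis: "(axis i 1, 0::real^'n) \<in> (Basis :: ((real^'n) \<times> (real^'n)) set)"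
  by (simp add: Basis_prod_def)

lemma ey_Basis: "(0::real^'n, axis i 1) \<in> (Basis :: ((real^'n) \<times> (real^'n)) set)"
  by (simp add: Basis_prod_def)

lemma dX_pdir: "dX i h x y = pdir (axis i 1, 0) (L h) (x,y)"
  by (simp add: dX_def pdir_def L_def)

lemma dY_pdir: "dY i h x y = pdir (0, axis i 1) (L h) (x,y)"
  by (simp add: dY_def pdir_def L_def)

lemma L_dX: "L (dX i h) = pdir (axis i 1, 0) (L h)"
  by (rule ext) (simp add: L_def dX_pdir)

lemma L_dY: "L (dY i h) = pdir (0, axis i 1) (L h)"
  by (rule ext) (simp add: L_def dY_pdir)

definition smf :: "((real^'n) \<times> (real^'n)) set \<Rightarrow> 'n::finite fin \<Rightarrow> bool" where
  "smf S h \<longleftrightarrow> smooth_on S (L h)"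

lemma smf_dX: "smf S h \<Longrightarrow> smf S (dX i h)"
  unfolding smf_def L_dX by (rule smooth_pdir[OF _ ex_Basis])

lemma smf_dY: "smf S h \<Longrightarrow> smf S (dY i h)"
  unfolding smf_def L_dY by (rule smooth_pdir[OF _ ey_Basis])

lemma smf_add: "smf S f \<Longrightarrow> smf S g \<Longrightarrow> smf S (\<lambda>x y. f x y + g x y)"
  unfolding smf_def L_def using smooth_add by fastforce

lemma smf_mult: "smf S f \<Longrightarrow> smf S g \<Longrightarrow> smf S (\<lambda>x y. f x y * g x y)"
  unfolding smf_def L_def using smooth_mult by fastforce

lemma smf_diff: "smf S f \<Longrightarrow> smf S g \<Longrightarrow> smf S (\<lambda>x y. f x y - g x y)"
  unfolding smf_def L_def using smooth_diff by fastforce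

lemma smf_const: "open S \<Longrightarrow> smf S (\<lambda>x y. c)"
  unfolding smf_def L_def using smooth_const by fastforce

lemma smf_cmult: "smf S f \<Longrightarrow> smf S (\<lambda>x y. c * f x y)"
  unfolding smf_def L_def using smooth_cmult by fastforce

lemma smf_divide: "smf S f \<Longrightarrow> smf S g \<Longrightarrow> (\<forall>x y. (x,y) \<in> S \<longrightarrow> g x y \<noteq> 0) \<Longrightarrow> smf S (\<lambda>x y. f x y / g x y)"
  unfolding smf_def L_def using smooth_divide[of S "\<lambda>z. f (fst z) (snd z)" "\<lambda>z. g (fst z) (snd z)"] by fastforce

lemma smf_sum: "finite A \<Longrightarrow> open S \<Longrightarrow> (\<And>i. i \<in> A \<Longrightarrow> smf S (f i)) \<Longrightarrow> smf S (\<lambda>x y. \<Sum>i\<in>A. f i x y)"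
  unfolding smf_def L_def using smooth_sum[of A S "\<lambda>i z. f i (fst z) (snd z)"] by simp

lemma smf_prod: "finite A \<Longrightarrow> open S \<Longrightarrow> (\<And>i. i \<in> A \<Longrightarrow> smf S (f i)) \<Longrightarrow> smf S (\<lambda>x y. \<Prod>i\<in>A. f i x y)"
  unfolding smf_def L_def using smooth_prod[of A S "\<lambda>i z. f i (fst z) (snd z)"] by simp

lemma smf_ycoord: "open S \<Longrightarrow> smf S (\<lambda>x y. y $ k)"
proof -
  assume "open S"
  from smooth_inner[OF this, of "(0, axis k 1)"]
  show ?thesis unfolding smf_def L_def by (simp add: inner_Pair_0 inner_axis)
qed

lemma smf_local: "smf S f \<Longrightarrow> (\<forall>x y. (x,y) \<in> S \<longrightarrow> f x y = g x y) \<Longrightarrow> smf S g"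
  unfolding smf_def L_def using smooth_local[of S "\<lambda>z. f (fst z) (snd z)" "\<lambda>z. g (fst z) (snd z)"] by fastforce

lemma smf_open: "smf S f \<Longrightarrow> open S"
  unfolding smf_def using smooth_open by blast

lemma clairaut_Y:
  assumes "smf S h" "(x,y) \<in> S"
  shows "dY i (dY j h) x y = dY j (dY i h) x y"
proof -
  have "dY i (dY j h) x y = pdir (0, axis i 1) (pdir (0, axis j 1) (L h)) (x,y)"
    by (simp add: dY_pdir L_dY)
  also have "\<dots> = pdir (0, axis j 1) (pdir (0, axis i 1) (L h)) (x,y)"
    by (rule clairaut[OF assms(1)[unfolded smf_def] assms(2) ey_Basis ey_Basis])
  also have "\<dots> = dY j (dY i h) x y" by (simp add: dY_pdir L_dY)
  finally show ?thesis .
qed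

lemma smf_has_derivative:
  assumes "smf S h" "z \<in> S"
  shows "(L h has_derivative (\<lambda>v. \<Sum>b\<in>Basis. (v \<bullet> b) * pdir b (L h) z)) (at z)"
proof (rule frechet_partials[OF smf_open[OF assms(1)] assms(2)])
  fix w b assume "w \<in> S" "(b::(real^'a) \<times> (real^'a)) \<in> Basis"
  then show "((\<lambda>t. L h (w + t *\<^sub>R b)) has_real_derivative pdir b (L h) w) (at 0)"
    using smooth_DERIV assms(1) unfolding smf_def by blast
next
  fix b assume "(b::(real^'a) \<times> (real^'a)) \<in> Basis"
  then show "continuous_on S (pdir b (L h))"
    using smooth_continuous smooth_pdir assms(1) unfolding smf_def by blast
qed

lemma smf_chain:
  assumes h: "smf S h" and z: "(xc s0, yc s0) \<in> S"
    and dx: "(xc has_vector_derivative x') (at s0)" and dy: "(yc has_vector_derivative y') (at s0)"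
  shows "((\<lambda>s. h (xc s) (yc s)) has_real_derivative
     (\<Sum>i\<in>UNIV. dX i h (xc s0) (yc s0) * x' $ i) + (\<Sum>i\<in>UNIV. dY i h (xc s0) (yc s0) * y' $ i)) (at s0)"
proof -
  let ?z = "(xc s0, yc s0)"
  have c: "((\<lambda>s. (xc s, yc s)) has_derivative (\<lambda>t. t *\<^sub>R (x', y'))) (at s0)"
    using has_vector_derivative_Pair[OF dx dy] unfolding has_vector_derivative_def .
  have comp: "((\<lambda>s. L h (xc s, yc s)) has_derivative
      (\<lambda>t. \<Sum>b\<in>Basis. ((t *\<^sub>R (x', y')) \<bullet> b) * pdir b (L h) ?z)) (at s0)"
    using has_derivative_compose[OF c smf_has_derivative[OF h z]] by simp
  define D where "D = (\<Sum>b\<in>Basis. ((x', y') \<bullet> b) * pdir b (L h) ?z)"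
  have fe: "(\<lambda>t. \<Sum>b\<in>Basis. ((t *\<^sub>R (x', y')) \<bullet> b) * pdir b (L h) ?z) = (\<lambda>t. D * t)"
    unfolding D_def
  proof (rule ext)
    fix t :: real
    show "(\<Sum>b\<in>Basis. ((t *\<^sub>R (x', y')) \<bullet> b) * pdir b (L h) ?z) = (\<Sum>b\<in>Basis. ((x', y') \<bullet> b) * pdir b (L h) ?z) * t"
      unfolding sum_distrib_right by (rule sum.cong[OF refl]) (simp only: inner_scaleR_left mult_ac)
  qed
  have DD: "D = (\<Sum>i\<in>UNIV. dX i h (xc s0) (yc s0) * x' $ i) + (\<Sum>i\<in>UNIV. dY i h (xc s0) (yc s0) * y' $ i)"
    unfolding D_def sum_Basis_prod_real sum_Basis_real_vec
    by (simp add: dX_pdir dY_pdir inner_axis mult.commute)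
  have "((\<lambda>s. L h (xc s, yc s)) has_derivative (\<lambda>t. D * t)) (at s0)"
    by (rule has_derivative_eq_rhs[OF comp fe])
  then have "((\<lambda>s. h (xc s) (yc s)) has_real_derivative D) (at s0)"
    unfolding has_field_derivative_def L_def by simp
  then show ?thesis unfolding DD .
qed

lemma dY_DERIV:
  assumes "smf S f" "(x,y) \<in> S"
  shows "((\<lambda>t. f x (y + t *\<^sub>R axis r 1)) has_real_derivative dY r f x y) (at 0)"
proof -
  have "((\<lambda>t. L f ((x,y) + t *\<^sub>R (0, axis r 1))) has_real_derivative pdir (0, axis r 1) (L f) (x,y)) (at 0)"
    by (rule smooth_DERIV[OF assms(1)[unfolded smf_def] assms(2) ey_Basis])
  then show ?thesis by (simp add: L_def dY_pdir)
qed

lemma dY_local: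
  assumes "open S" "\<forall>x y. (x,y) \<in> S \<longrightarrow> f x y = g x y" "(x,y) \<in> S"
  shows "dY r f x y = dY r g x y"
  unfolding dY_pdir by (rule pdir_local[OF assms(1) assms(3)]) (use assms(2) in \<open>auto simp: L_def\<close>)

lemma dX_local:
  assumes "open S" "\<forall>x y. (x,y) \<in> S \<longrightarrow> f x y = g x y" "(x,y) \<in> S"
  shows "dX r f x y = dX r g x y"
  unfolding dX_pdir by (rule pdir_local[OF assms(1) assms(3)]) (use assms(2) in \<open>auto simp: L_def\<close>)

lemma euler_gen:
  assumes f: "smf S f" and xy: "(x,y) \<in> S" and hom: "\<forall>c>0. f x (c *\<^sub>R y) = c ^ k * f x y"
  shows "(\<Sum>i\<in>UNIV. dY i f x y * y $ i) = real k * f x y"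
proof -
  have d1: "((\<lambda>c. f x (c *\<^sub>R y)) has_real_derivative
      (\<Sum>i\<in>UNIV. dX i f x y * (0::real^'a) $ i) + (\<Sum>i\<in>UNIV. dY i f x y * y $ i)) (at 1)"
  proof -
    have v: "((\<lambda>c. c *\<^sub>R y) has_vector_derivative y) (at 1)"
      unfolding has_vector_derivative_def by (rule has_derivative_scaleR_left[OF has_derivative_ident])
    have v0: "((\<lambda>c. x) has_vector_derivative 0) (at 1)" by (rule has_vector_derivative_const)
    show ?thesis using smf_chain[OF f, of "\<lambda>c. x" 1 "\<lambda>c. c *\<^sub>R y", OF _ v0 v] xy by simp
  qed
  have der: "((\<lambda>c. c ^ k * f x y) has_real_derivative real k * f x y) (at 1)"
    by (auto intro!: derivative_eq_intros)
  have ev: "\<forall>\<^sub>F c in nhds 1. c ^ k * f x y = f x (c *\<^sub>R y)"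
  proof -
    have "\<forall>\<^sub>F c in nhds (1::real). c \<in> {0<..}" by (rule eventually_nhds_in_open) auto
    then show ?thesis by (rule eventually_mono) (use hom in auto)
  qed
  have d2: "((\<lambda>c. f x (c *\<^sub>R y)) has_real_derivative real k * f x y) (at 1)"
    using DERIV_cong_ev[OF refl ev refl, THEN iffD1, OF der] .
  show ?thesis using DERIV_unique[OF d1 d2] by simp
qed

locale FC =
  fixes U :: "(real^'n::finite) set" and F :: "'n fin"
  assumes fc: "finsler_chart U F"
begin

abbreviation "S0 \<equiv> U \<times> (UNIV - {0::real^'n})"

lemma openU: "open U" using fc unfolding finsler_chart_def by simp

lemma openS0: "open S0"
  using openU by (intro open_Times) auto

lemma smF: "smf S0 F"
  using fc unfolding finsler_chart_def smf_def L_def by simp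

lemma smFsq: "smf S0 (Fsq F)"
  by (rule smf_local[OF smf_mult[OF smF smF]]) (simp add: Fsq_def power2_eq_square)

lemma smg: "smf S0 (gF F i j)"
  unfolding gF_def by (intro smf_cmult smf_dY smFsq)

lemma homF: "x \<in> U \<Longrightarrow> c > 0 \<Longrightarrow> F x (c *\<^sub>R y) = c * F x y"
  using fc unfolding finsler_chart_def by simp

lemma F0: "x \<in> U \<Longrightarrow> F x 0 = 0"
  using homF[of x 2 0] by simp

lemma homFsq: "x \<in> U \<Longrightarrow> c > 0 \<Longrightarrow> Fsq F x (c *\<^sub>R y) = c^2 * Fsq F x y"
  unfolding Fsq_def by (simp add: homF power_mult_distrib)

lemma posdef: "x \<in> U \<Longrightarrow> y \<noteq> 0 \<Longrightarrow> v \<noteq> 0 \<Longrightarrow> (\<Sum>i\<in>UNIV. \<Sum>j\<in>UNIV. gF F i j x y * v $ i * v $ j) > 0"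
  using fc unfolding finsler_chart_def by blast

lemma gsym: "(x,y) \<in> S0 \<Longrightarrow> gF F i j x y = gF F j i x y"
  unfolding gF_def using clairaut_Y[OF smFsq] by simp

lemma hom_dY:
  assumes xy: "(x,y) \<in> S0" and c: "c > 0"
  shows "dY j (Fsq F) x (c *\<^sub>R y) = c * dY j (Fsq F) x y"
proof -
  define \<phi> where "\<phi> u = Fsq F x (y + u *\<^sub>R axis j 1)" for u
  have d: "(\<phi> has_real_derivative dY j (Fsq F) x y) (at 0)"
    unfolding \<phi>_def by (rule dY_DERIV[OF smFsq xy])
  have dc: "((\<lambda>t. t / c) has_real_derivative 1 / c) (at 0)" using c by (auto intro!: derivative_eq_intros)
  have d': "DERIV \<phi> ((\<lambda>t. t / c) 0) :> dY j (Fsq F) x y" using d by simp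
  have "((\<lambda>t. \<phi> (t / c)) has_real_derivative dY j (Fsq F) x y * (1 / c)) (at 0)"
    using DERIV_chain'[OF dc d'] by simp
  then have "((\<lambda>t. c^2 * \<phi> (t / c)) has_real_derivative c^2 * (dY j (Fsq F) x y * (1 / c))) (at 0)"
    by (rule DERIV_cmult)
  moreover have "(\<lambda>t. Fsq F x (c *\<^sub>R y + t *\<^sub>R axis j 1)) = (\<lambda>t. c^2 * \<phi> (t / c))"
  proof
    fix t
    have "c *\<^sub>R y + t *\<^sub>R axis j 1 = c *\<^sub>R (y + (t / c) *\<^sub>R axis j 1)" using c by (simp add: algebra_simps)
    then show "Fsq F x (c *\<^sub>R y + t *\<^sub>R axis j 1) = c^2 * \<phi> (t / c)"
      unfolding \<phi>_def using homFsq[of x c] xy c by simp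
  qed
  ultimately have "((\<lambda>t. Fsq F x (c *\<^sub>R y + t *\<^sub>R axis j 1)) has_real_derivative c * dY j (Fsq F) x y) (at 0)"
    using c by (simp add: power2_eq_square field_simps)
  then show ?thesis unfolding dY_def by (rule DERIV_imp_deriv)
qed

lemma euler0: "(x,y) \<in> S0 \<Longrightarrow> (\<Sum>i\<in>UNIV. dY i (Fsq F) x y * y $ i) = 2 * Fsq F x y"
  using euler_gen[OF smFsq, of x y 2] homFsq by simp

lemma euler1: "(x,y) \<in> S0 \<Longrightarrow> (\<Sum>i\<in>UNIV. dY i (dY j (Fsq F)) x y * y $ i) = dY j (Fsq F) x y"
  using euler_gen[OF smf_dY[OF smFsq, of j], of x y 1] hom_dY by simp

lemma gy: "(x,y) \<in> S0 \<Longrightarrow> (\<Sum>i\<in>UNIV. gF F i j x y * y $ i) = 1/2 * dY j (Fsq F) x y"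
proof -
  assume xy: "(x,y) \<in> S0"
  have "(\<Sum>i\<in>UNIV. gF F i j x y * y $ i) = (\<Sum>i\<in>UNIV. 1/2 * (dY i (dY j (Fsq F)) x y * y $ i))"
    unfolding gF_def by (simp only: mult.assoc)
  also have "\<dots> = 1/2 * (\<Sum>i\<in>UNIV. dY i (dY j (Fsq F)) x y * y $ i)" by (rule sum_distrib_left[symmetric])
  also have "\<dots> = 1/2 * dY j (Fsq F) x y" using euler1[OF xy, of j] by simp
  finally show ?thesis .
qed

lemma gyy: "(x,y) \<in> S0 \<Longrightarrow> (\<Sum>i\<in>UNIV. \<Sum>j\<in>UNIV. gF F i j x y * y $ i * y $ j) = Fsq F x y"
proof -
  assume xy: "(x,y) \<in> S0"
  have "(\<Sum>i\<in>UNIV. \<Sum>j\<in>UNIV. gF F i j x y * y $ i * y $ j) = (\<Sum>j\<in>UNIV. \<Sum>i\<in>UNIV. gF F i j x y * y $ i * y $ j)"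
    by (rule sum.swap)
  also have "\<dots> = (\<Sum>j\<in>UNIV. (\<Sum>i\<in>UNIV. gF F i j x y * y $ i) * y $ j)"
    by (simp add: sum_distrib_right)
  also have "\<dots> = (\<Sum>j\<in>UNIV. 1/2 * (dY j (Fsq F) x y * y $ j))"
    by (rule sum.cong[OF refl]) (simp only: gy[OF xy] mult.assoc)
  also have "\<dots> = 1/2 * (\<Sum>j\<in>UNIV. dY j (Fsq F) x y * y $ j)" by (rule sum_distrib_left[symmetric])
  also have "\<dots> = Fsq F x y" using euler0[OF xy] by simp
  finally show ?thesis .
qed

lemma euler2:
  assumes xy: "(x,y) \<in> S0"
  shows "(\<Sum>i\<in>UNIV. y $ i * dY r (gF F i j) x y) = 0"
proof -
  define Q where "Q t = (\<Sum>i\<in>UNIV. (y + t *\<^sub>R axis r 1) $ i * gF F i j x (y + t *\<^sub>R axis r 1))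
      - 1/2 * dY j (Fsq F) x (y + t *\<^sub>R axis r 1)" for t
  have dQ: "(Q has_real_derivative
      (\<Sum>i\<in>UNIV. (if i = r then 1 else 0) * gF F i j x y + y $ i * dY r (gF F i j) x y) - 1/2 * dY r (dY j (Fsq F)) x y) (at 0)"
    unfolding Q_def
  proof (intro DERIV_diff DERIV_sum DERIV_cmult)
    fix i
    have c: "((\<lambda>t. (y + t *\<^sub>R axis r 1) $ i) has_real_derivative (if i = r then 1 else 0)) (at 0)"
      by (auto intro!: derivative_eq_intros simp: axis_def)
    show "((\<lambda>t. (y + t *\<^sub>R axis r 1) $ i * gF F i j x (y + t *\<^sub>R axis r 1)) has_real_derivative
         (if i = r then 1 else 0) * gF F i j x y + y $ i * dY r (gF F i j) x y) (at 0)"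
      by (rule DERIV_cong[OF DERIV_mult'[OF c dY_DERIV[OF smg[of i j] xy, of r]]]) simp
  next
    show "((\<lambda>t. dY j (Fsq F) x (y + t *\<^sub>R axis r 1)) has_real_derivative dY r (dY j (Fsq F)) x y) (at 0)"
      by (rule dY_DERIV[OF smf_dY[OF smFsq] xy])
  qed
  have "\<forall>\<^sub>F t in nhds 0. (x, y + t *\<^sub>R axis r 1) \<in> S0"
    using eventually_line_in[OF openS0 xy, of "(0, axis r 1)"] by simp
  then have "\<forall>\<^sub>F t in nhds 0. 0 = Q t"
  proof (rule eventually_mono)
    fix t assume "(x, y + t *\<^sub>R axis r 1) \<in> S0"
    from gy[OF this, of j] show "0 = Q t" unfolding Q_def by (simp add: mult.commute)
  qed
  then have "(Q has_real_derivative 0) (at 0)"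
    using DERIV_cong_ev[OF refl _ refl, of "\<lambda>t. 0" Q 0, THEN iffD1] by simp
  from DERIV_unique[OF dQ this]
  have "(\<Sum>i\<in>UNIV. (if i = r then 1 else 0) * gF F i j x y + y $ i * dY r (gF F i j) x y) - 1/2 * dY r (dY j (Fsq F)) x y = 0" .
  moreover have "(\<Sum>i\<in>UNIV. (if i = r then 1 else 0) * gF F i j x y) = gF F r j x y"
  proof -
    have "(\<Sum>i\<in>UNIV. (if i = r then 1 else 0) * gF F i j x y) = (\<Sum>i\<in>UNIV. if i = r then gF F i j x y else 0)"
      by (rule sum.cong) auto
    then show ?thesis by simp
  qed
  ultimately show ?thesis unfolding sum.distrib gF_def by simp
qed

end

lemma smf_det:
  fixes M :: "real^'n::finite \<Rightarrow> real^'n \<Rightarrow> real^'k::finite^'k"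
  assumes "open S" "\<And>a b. smf S (\<lambda>x y. M x y $ a $ b)"
  shows "smf S (\<lambda>x y. det (M x y))"
proof -
  have "smf S (\<lambda>x y. \<Sum>p\<in>{p. p permutes (UNIV::'k set)}. of_int (sign p) * (\<Prod>i\<in>UNIV. M x y $ i $ p i))"
    by (intro smf_sum smf_cmult smf_prod assms finite_permutations) simp_all
  then show ?thesis unfolding det_def .
qed

context FC
begin

lemma gmat_nth: "gmat F x y $ i $ j = gF F i j x y"
  by (simp add: gmat_def)

lemma ginvertible:
  assumes xy: "(x,y) \<in> S0"
  shows "invertible (gmat F x y)"
proof -
  have "\<forall>v. gmat F x y *v v = 0 \<longrightarrow> v = 0"
  proof (intro allI impI)
    fix v assume A: "gmat F x y *v v = 0"
    show "v = 0"
    proof (rule ccontr)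
      assume "v \<noteq> 0"
      then have P: "(\<Sum>i\<in>UNIV. \<Sum>j\<in>UNIV. gF F i j x y * v $ i * v $ j) > 0" using posdef xy by auto
      have "(\<Sum>i\<in>UNIV. \<Sum>j\<in>UNIV. gF F i j x y * v $ i * v $ j) = (\<Sum>i\<in>UNIV. v $ i * (gmat F x y *v v) $ i)"
        by (rule sum.cong[OF refl]) (simp add: matrix_vector_mult_def gmat_nth sum_distrib_left mult_ac)
      also have "\<dots> = 0" using A by simp
      finally show False using P by simp
    qed
  qed
  then obtain B where "B ** gmat F x y = mat 1" using matrix_left_invertible_ker by blast
  then show ?thesis unfolding invertible_def using matrix_left_right_inverse by blast
qed

lemma ginv_mult:
  assumes xy: "(x,y) \<in> S0"
  shows "gmat F x y ** matrix_inv (gmat F x y) = mat 1" "matrix_inv (gmat F x y) ** gmat F x y = mat 1"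
proof -
  have "\<exists>A'. gmat F x y ** A' = mat 1 \<and> A' ** gmat F x y = mat 1"
    using ginvertible[OF xy] unfolding invertible_def .
  from someI_ex[OF this]
  show "gmat F x y ** matrix_inv (gmat F x y) = mat 1" "matrix_inv (gmat F x y) ** gmat F x y = mat 1"
    unfolding matrix_inv_def by auto
qed

lemma inv_contract:
  assumes xy: "(x,y) \<in> S0"
  shows "(\<Sum>k\<in>UNIV. gF F j k x y * ginv F k l x y) = (if j = l then 1 else 0)"
proof -
  have "(gmat F x y ** matrix_inv (gmat F x y)) $ j $ l = mat 1 $ j $ l" using ginv_mult(1)[OF xy] by simp
  then show ?thesis by (simp add: matrix_matrix_mult_def mat_def gmat_nth ginv_def)
qed

lemma det_nz: "(x,y) \<in> S0 \<Longrightarrow> det (gmat F x y) \<noteq> 0"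
  using ginvertible invertible_det_nz by blast

lemma ginv_cramer:
  assumes xy: "(x,y) \<in> S0"
  shows "ginv F i j x y = det (\<chi> a b. if b = i then axis j 1 $ a else gmat F x y $ a $ b) / det (gmat F x y)"
proof -
  let ?A = "gmat F x y"
  have "?A *v (matrix_inv ?A *v axis j 1) = axis j 1"
    by (simp add: matrix_vector_mul_assoc ginv_mult(1)[OF xy])
  then have "matrix_inv ?A *v axis j 1 = (\<chi> k. det(\<chi> a b. if b = k then axis j 1 $ a else ?A $ a $ b) / det ?A)"
    using cramer[OF det_nz[OF xy]] by blast
  then have "(matrix_inv ?A *v axis j 1) $ i = det(\<chi> a b. if b = i then axis j 1 $ a else ?A $ a $ b) / det ?A"
    by simp
  then show ?thesis by (simp add: matrix_vector_mult_basis column_def ginv_def gmat_nth)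
qed

lemma smginv: "smf S0 (ginv F i j)"
proof -
  have e: "\<And>a b. smf S0 (\<lambda>x y. (\<chi> a b. if b = i then axis j 1 $ a else gmat F x y $ a $ b) $ a $ b)"
  proof -
    fix a b
    show "smf S0 (\<lambda>x y. (\<chi> a b. if b = i then axis j 1 $ a else gmat F x y $ a $ b) $ a $ b)"
    proof (cases "b = i")
      case True then show ?thesis using smf_const[OF openS0] by simp
    next
      case False then show ?thesis using smg by (simp add: gmat_nth)
    qed
  qed
  have g: "smf S0 (\<lambda>x y. det (gmat F x y))"
    by (rule smf_det[OF openS0]) (simp add: gmat_nth smg)
  have "smf S0 (\<lambda>x y. det (\<chi> a b. if b = i then axis j 1 $ a else gmat F x y $ a $ b) / det (gmat F x y))"
    by (rule smf_divide[OF smf_det[OF openS0 e] g]) (use det_nz in auto)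
  then show ?thesis by (rule smf_local) (use ginv_cramer in auto)
qed

lemma smGs: "smf S0 (Gs F r)"
  unfolding Gs_def
  by (intro smf_cmult smf_sum smf_mult smf_diff smginv smf_dX smf_dY smFsq smf_ycoord openS0) simp_all

lemma smGn: "smf S0 (Gn F r i)"
  unfolding Gn_def by (rule smf_dY[OF smGs])

lemma smdelta: "smf S0 h \<Longrightarrow> smf S0 (delta F i h)"
  unfolding delta_def
  by (intro smf_sum smf_mult smf_diff smf_dX smf_dY smGn openS0) simp_all

lemma smGam: "smf S0 (Gam F k i j)"
  unfolding Gam_def
  by (intro smf_cmult smf_sum smf_mult smf_diff smf_add smginv smdelta smg openS0) simp_all

lemma smClow: "smf S0 (Clow F i j k)"
  unfolding Clow_def by (intro smf_cmult smf_dY smg)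

lemma smCup: "smf S0 (Cup F i j k)"
  unfolding Cup_def by (intro smf_sum smf_mult smginv smClow openS0) simp_all

end

lemma sum_if_delta: fixes c :: "'n::finite \<Rightarrow> real" shows "(\<Sum>l\<in>UNIV. (if j = l then 1 else 0) * c l) = c j"
proof -
  have "(\<Sum>l\<in>UNIV. (if j = l then 1 else 0) * c l) = (\<Sum>l\<in>UNIV. if j = l then c l else 0)"
    by (rule sum.cong) auto
  then show ?thesis using sum.delta'[of UNIV j c] by simp
qed

lemma contract:
  fixes g gi :: "'n::finite \<Rightarrow> 'n \<Rightarrow> real"
  assumes gsym: "\<And>i j. g i j = g j i"
    and inv: "\<And>j l. (\<Sum>k\<in>UNIV. g j k * gi k l) = (if j = l then 1 else 0)"
  shows "(\<Sum>k\<in>UNIV. g k j * (\<Sum>l\<in>UNIV. gi k l * c l)) = c j"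
proof -
  have "(\<Sum>k\<in>UNIV. g k j * (\<Sum>l\<in>UNIV. gi k l * c l)) = (\<Sum>k\<in>UNIV. \<Sum>l\<in>UNIV. g j k * gi k l * c l)"
    by (simp add: gsym[of _ j] sum_distrib_left mult.assoc)
  also have "\<dots> = (\<Sum>l\<in>UNIV. \<Sum>k\<in>UNIV. g j k * gi k l * c l)" by (rule sum.swap)
  also have "\<dots> = (\<Sum>l\<in>UNIV. (\<Sum>k\<in>UNIV. g j k * gi k l) * c l)" by (simp add: sum_distrib_right)
  also have "\<dots> = (\<Sum>l\<in>UNIV. (if j = l then 1 else 0) * c l)" by (simp add: inv)
  also have "\<dots> = c j" by (rule sum_if_delta)
  finally show ?thesis .
qed

lemma conn_algebra:
  fixes g gi :: "'n::finite \<Rightarrow> 'n \<Rightarrow> real" and dl dg dx :: "'n \<Rightarrow> 'n \<Rightarrow> 'n \<Rightarrow> real"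
    and Gn :: "'n \<Rightarrow> 'n \<Rightarrow> real" and y a b U :: "'n \<Rightarrow> real"
    and \<Gamma> Cu :: "'n \<Rightarrow> 'n \<Rightarrow> 'n \<Rightarrow> real" and conn :: "('n \<Rightarrow> real) \<Rightarrow> 'n \<Rightarrow> real"
  assumes gsym: "\<And>i j. g i j = g j i"
    and inv: "\<And>j l. (\<Sum>k\<in>UNIV. g j k * gi k l) = (if j = l then 1 else 0)"
    and dlsym: "\<And>m i j. dl m i j = dl m j i"
    and dgsym: "\<And>r i j. dg r i j = dg r j i"
    and dldef: "\<And>m i j. dl m i j = dx m i j - (\<Sum>r\<in>UNIV. Gn r m * dg r i j)"
    and eul: "\<And>r i. (\<Sum>j\<in>UNIV. y j * dg r i j) = 0"
    and Gam_eq: "\<And>k i j. \<Gamma> k i j = 1/2 * (\<Sum>l\<in>UNIV. gi k l * (dl i j l + dl j i l - dl l i j))"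
    and Cu_eq: "\<And>k i r. Cu k i r = (\<Sum>q\<in>UNIV. gi k q * (1/2 * dg r q i))"
    and conn_eq: "\<And>W k. conn W k = (\<Sum>i\<in>UNIV. W i * ((\<Sum>j\<in>UNIV. \<Gamma> k i j * y j) + (\<Sum>r\<in>UNIV. Cu k i r * b r)))"
  shows "(\<Sum>i\<in>UNIV. \<Sum>j\<in>UNIV. g i j * conn U i * y j) + (\<Sum>i\<in>UNIV. \<Sum>j\<in>UNIV. g i j * U i * conn y j)
    = (\<Sum>i\<in>UNIV. \<Sum>j\<in>UNIV. ((\<Sum>k\<in>UNIV. dx k i j * y k) + (\<Sum>k\<in>UNIV. dg k i j * a k)) * U i * y j)"
proof -
  define A where "A i j m = 1/2 * (dl i m j + dl m i j - dl j i m)" for i j m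
  define B where "B i j r = 1/2 * dg r j i" for i j r
  define P where "P i j = (\<Sum>m\<in>UNIV. A i j m * y m) + (\<Sum>r\<in>UNIV. B i j r * b r)" for i j
  define Q where "Q k i = (\<Sum>m\<in>UNIV. \<Gamma> k i m * y m) + (\<Sum>r\<in>UNIV. Cu k i r * b r)" for k i
  have connQ: "conn W k = (\<Sum>i\<in>UNIV. W i * Q k i)" for W k unfolding conn_eq Q_def ..
  have Gam': "\<Gamma> k i m = (\<Sum>l\<in>UNIV. gi k l * A i l m)" for k i m
    unfolding Gam_eq A_def sum_distrib_left by (rule sum.cong[OF refl]) simp
  have kG: "(\<Sum>k\<in>UNIV. g k j * \<Gamma> k i m) = A i j m" for i j m
    unfolding Gam' by (rule contract[OF gsym inv])
  have kC: "(\<Sum>k\<in>UNIV. g k j * Cu k i r) = B i j r" for i j r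
    unfolding Cu_eq B_def by (rule contract[OF gsym inv])
  have KP: "(\<Sum>k\<in>UNIV. g k j * Q k i) = P i j" for i j
  proof -
    have "(\<Sum>k\<in>UNIV. g k j * Q k i)
       = (\<Sum>k\<in>UNIV. \<Sum>m\<in>UNIV. g k j * \<Gamma> k i m * y m) + (\<Sum>k\<in>UNIV. \<Sum>r\<in>UNIV. g k j * Cu k i r * b r)"
      unfolding Q_def by (simp only: distrib_left sum.distrib sum_distrib_left mult.assoc)
    also have "\<dots> = (\<Sum>m\<in>UNIV. \<Sum>k\<in>UNIV. g k j * \<Gamma> k i m * y m) + (\<Sum>r\<in>UNIV. \<Sum>k\<in>UNIV. g k j * Cu k i r * b r)"
      by (rule arg_cong2[where f="(+)"]; rule sum.swap)
    also have "\<dots> = (\<Sum>m\<in>UNIV. (\<Sum>k\<in>UNIV. g k j * \<Gamma> k i m) * y m) + (\<Sum>r\<in>UNIV. (\<Sum>k\<in>UNIV. g k j * Cu k i r) * b r)"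
      by (simp only: sum_distrib_right)
    also have "\<dots> = P i j" unfolding P_def kG kC ..
    finally show ?thesis .
  qed
  have A1: "(\<Sum>k\<in>UNIV. \<Sum>j\<in>UNIV. g k j * conn W k * z j) = (\<Sum>i\<in>UNIV. \<Sum>j\<in>UNIV. W i * z j * P i j)" for W z
  proof -
    have "(\<Sum>k\<in>UNIV. \<Sum>j\<in>UNIV. g k j * conn W k * z j)
        = (\<Sum>k\<in>UNIV. \<Sum>j\<in>UNIV. \<Sum>i\<in>UNIV. W i * z j * (g k j * Q k i))"
    proof (rule sum.cong[OF refl], rule sum.cong[OF refl])
      fix k j
      show "g k j * conn W k * z j = (\<Sum>i\<in>UNIV. W i * z j * (g k j * Q k i))"
        unfolding connQ sum_distrib_left sum_distrib_right by (rule sum.cong[OF refl]) (simp only: mult_ac)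
    qed
    also have "\<dots> = (\<Sum>j\<in>UNIV. \<Sum>k\<in>UNIV. \<Sum>i\<in>UNIV. W i * z j * (g k j * Q k i))"
      by (rule sum.swap)
    also have "\<dots> = (\<Sum>j\<in>UNIV. \<Sum>i\<in>UNIV. \<Sum>k\<in>UNIV. W i * z j * (g k j * Q k i))"
      by (rule sum.cong[OF refl], rule sum.swap)
    also have "\<dots> = (\<Sum>j\<in>UNIV. \<Sum>i\<in>UNIV. W i * z j * P i j)"
      by (simp only: sum_distrib_left[symmetric] KP)
    also have "\<dots> = (\<Sum>i\<in>UNIV. \<Sum>j\<in>UNIV. W i * z j * P i j)" by (rule sum.swap)
    finally show ?thesis .
  qed
  have second: "(\<Sum>i\<in>UNIV. \<Sum>j\<in>UNIV. g i j * U i * conn y j) = (\<Sum>k\<in>UNIV. \<Sum>j\<in>UNIV. g k j * conn y k * U j)"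
  proof -
    have "(\<Sum>i\<in>UNIV. \<Sum>j\<in>UNIV. g i j * U i * conn y j) = (\<Sum>j\<in>UNIV. \<Sum>i\<in>UNIV. g i j * U i * conn y j)"
      by (rule sum.swap)
    also have "\<dots> = (\<Sum>k\<in>UNIV. \<Sum>j\<in>UNIV. g k j * conn y k * U j)"
    proof (rule sum.cong[OF refl], rule sum.cong[OF refl])
      fix k j show "g j k * U j * conn y k = g k j * conn y k * U j" using gsym[of j k] by (simp only: mult_ac)
    qed
    finally show ?thesis .
  qed
  have PP: "P i j + P j i = (\<Sum>m\<in>UNIV. dl m i j * y m) + (\<Sum>r\<in>UNIV. dg r i j * b r)" for i j
  proof -
    have Am: "A i j m + A j i m = dl m i j" for m
      unfolding A_def using dlsym[of i m j] dlsym[of j m i] dlsym[of m j i] by (simp add: field_simps)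
    have Br: "B i j r + B j i r = dg r i j" for r
      unfolding B_def using dgsym[of r j i] by (simp add: field_simps)
    have "(\<Sum>m\<in>UNIV. dl m i j * y m) + (\<Sum>r\<in>UNIV. dg r i j * b r)
        = (\<Sum>m\<in>UNIV. (A i j m + A j i m) * y m) + (\<Sum>r\<in>UNIV. (B i j r + B j i r) * b r)"
      unfolding Am Br ..
    also have "\<dots> = ((\<Sum>m\<in>UNIV. A i j m * y m) + (\<Sum>m\<in>UNIV. A j i m * y m))
       + ((\<Sum>r\<in>UNIV. B i j r * b r) + (\<Sum>r\<in>UNIV. B j i r * b r))"
      by (simp only: distrib_right sum.distrib)
    also have "\<dots> = P i j + P j i" unfolding P_def by (simp only: add_ac)
    finally show ?thesis by (rule sym)
  qed
  have LHS: "(\<Sum>i\<in>UNIV. \<Sum>j\<in>UNIV. g i j * conn U i * y j) + (\<Sum>i\<in>UNIV. \<Sum>j\<in>UNIV. g i j * U i * conn y j)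
      = (\<Sum>i\<in>UNIV. \<Sum>j\<in>UNIV. U i * y j * ((\<Sum>m\<in>UNIV. dl m i j * y m) + (\<Sum>r\<in>UNIV. dg r i j * b r)))"
  proof -
    have "(\<Sum>i\<in>UNIV. \<Sum>j\<in>UNIV. g i j * U i * conn y j) = (\<Sum>i\<in>UNIV. \<Sum>j\<in>UNIV. y i * U j * P i j)"
      unfolding second A1 ..
    also have "\<dots> = (\<Sum>j\<in>UNIV. \<Sum>i\<in>UNIV. y i * U j * P i j)" by (rule sum.swap)
    also have "\<dots> = (\<Sum>i\<in>UNIV. \<Sum>j\<in>UNIV. U i * y j * P j i)"
      by (rule sum.cong[OF refl], rule sum.cong[OF refl]) (simp only: mult_ac)
    finally have S2: "(\<Sum>i\<in>UNIV. \<Sum>j\<in>UNIV. g i j * U i * conn y j) = (\<Sum>i\<in>UNIV. \<Sum>j\<in>UNIV. U i * y j * P j i)" .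
    have S1: "(\<Sum>i\<in>UNIV. \<Sum>j\<in>UNIV. g i j * conn U i * y j) = (\<Sum>i\<in>UNIV. \<Sum>j\<in>UNIV. U i * y j * P i j)"
      by (rule A1)
    show ?thesis unfolding S1 S2 sum.distrib[symmetric] distrib_left[symmetric] PP ..
  qed
  have dlsum: "(\<Sum>m\<in>UNIV. dl m i j * y m) = (\<Sum>m\<in>UNIV. dx m i j * y m) - (\<Sum>r\<in>UNIV. (\<Sum>m\<in>UNIV. Gn r m * y m) * dg r i j)" for i j
  proof -
    have "(\<Sum>m\<in>UNIV. dl m i j * y m) = (\<Sum>m\<in>UNIV. dx m i j * y m - (\<Sum>r\<in>UNIV. Gn r m * dg r i j * y m))"
      by (rule sum.cong[OF refl]) (simp only: dldef left_diff_distrib sum_distrib_right)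
    also have "\<dots> = (\<Sum>m\<in>UNIV. dx m i j * y m) - (\<Sum>m\<in>UNIV. \<Sum>r\<in>UNIV. Gn r m * dg r i j * y m)"
      by (rule sum_subtractf)
    also have "(\<Sum>m\<in>UNIV. \<Sum>r\<in>UNIV. Gn r m * dg r i j * y m) = (\<Sum>r\<in>UNIV. \<Sum>m\<in>UNIV. Gn r m * dg r i j * y m)"
      by (rule sum.swap)
    also have "\<dots> = (\<Sum>r\<in>UNIV. (\<Sum>m\<in>UNIV. Gn r m * y m) * dg r i j)"
      unfolding sum_distrib_right by (rule sum.cong[OF refl], rule sum.cong[OF refl]) (simp only: mult_ac)
    finally show ?thesis .
  qed
  define e where "e r = b r - a r - (\<Sum>m\<in>UNIV. Gn r m * y m)" for r
  have brk: "(\<Sum>m\<in>UNIV. dl m i j * y m) + (\<Sum>r\<in>UNIV. dg r i j * b r)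
      = ((\<Sum>k\<in>UNIV. dx k i j * y k) + (\<Sum>k\<in>UNIV. dg k i j * a k)) + (\<Sum>r\<in>UNIV. e r * dg r i j)" for i j
  proof -
    have "(\<Sum>r\<in>UNIV. e r * dg r i j) = (\<Sum>r\<in>UNIV. dg r i j * b r) - (\<Sum>r\<in>UNIV. dg r i j * a r) - (\<Sum>r\<in>UNIV. (\<Sum>m\<in>UNIV. Gn r m * y m) * dg r i j)"
    proof -
      have "(\<Sum>r\<in>UNIV. e r * dg r i j) = (\<Sum>r\<in>UNIV. dg r i j * b r - dg r i j * a r - (\<Sum>m\<in>UNIV. Gn r m * y m) * dg r i j)"
        unfolding e_def by (rule sum.cong[OF refl]) (simp only: left_diff_distrib right_diff_distrib mult_ac)
      then show ?thesis by (simp only: sum_subtractf)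
    qed
    then show ?thesis unfolding dlsum by simp
  qed
  have van: "(\<Sum>i\<in>UNIV. \<Sum>j\<in>UNIV. U i * y j * (\<Sum>r\<in>UNIV. e r * dg r i j)) = 0"
  proof -
    have "(\<Sum>i\<in>UNIV. \<Sum>j\<in>UNIV. U i * y j * (\<Sum>r\<in>UNIV. e r * dg r i j))
        = (\<Sum>i\<in>UNIV. U i * (\<Sum>j\<in>UNIV. \<Sum>r\<in>UNIV. e r * (y j * dg r i j)))"
      by (rule sum.cong[OF refl]) (simp only: sum_distrib_left mult_ac)
    also have "\<dots> = (\<Sum>i\<in>UNIV. U i * (\<Sum>r\<in>UNIV. e r * (\<Sum>j\<in>UNIV. y j * dg r i j)))"
      by (rule sum.cong[OF refl], rule arg_cong[where f="\<lambda>z. U _ * z"], subst sum.swap) (simp only: sum_distrib_left)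
    also have "\<dots> = 0" by (simp add: eul)
    finally show ?thesis .
  qed
  have fin: "(\<Sum>i\<in>UNIV. \<Sum>j\<in>UNIV. U i * y j * (X i j + Y i j))
     = (\<Sum>i\<in>UNIV. \<Sum>j\<in>UNIV. X i j * U i * y j) + (\<Sum>i\<in>UNIV. \<Sum>j\<in>UNIV. U i * y j * Y i j)"
    for X Y :: "'n \<Rightarrow> 'n \<Rightarrow> real"
    by (simp add: distrib_left sum.distrib mult_ac)
  show ?thesis unfolding LHS brk
    using fin[of "\<lambda>i j. (\<Sum>k\<in>UNIV. dx k i j * y k) + (\<Sum>k\<in>UNIV. dg k i j * a k)" "\<lambda>i j. \<Sum>r\<in>UNIV. e r * dg r i j"] van
    by simp
qed

lemma vd_nth_DERIV:
  fixes W :: "real \<Rightarrow> real^'n::finite"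
  assumes "(W has_vector_derivative W') (at s)"
  shows "((\<lambda>t. W t $ k) has_real_derivative W' $ k) (at s)"
proof -
  have "((\<lambda>t. W t $ k) has_derivative (\<lambda>h. (h *\<^sub>R W') $ k)) (at s)"
    using has_derivative_compose[OF assms[unfolded has_vector_derivative_def]
        bounded_linear_imp_has_derivative[OF bounded_linear_vec_nth[of k]]] by simp
  then show ?thesis unfolding has_field_derivative_def by (rule has_derivative_eq_rhs) (auto simp: fun_eq_iff)
qed

lemma vd_real:
  "(f has_real_derivative D) (at s) \<Longrightarrow> vd f s = D"
  unfolding vd_def by (rule vector_derivative_at) (simp add: has_real_derivative_iff_has_vector_derivative)

lemma vd_nth:
  fixes W :: "real \<Rightarrow> real^'n::finite"
  assumes "(W has_vector_derivative W') (at s)"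
  shows "vd (\<lambda>t. W t $ k) s = W' $ k"
  by (rule vd_real[OF vd_nth_DERIV[OF assms]])

context FC
begin

lemma dlsym: "(x,y) \<in> S0 \<Longrightarrow> delta F m (gF F i j) x y = delta F m (gF F j i) x y"
proof -
  assume xy: "(x,y) \<in> S0"
  have e: "\<forall>x y. (x,y) \<in> S0 \<longrightarrow> gF F i j x y = gF F j i x y" using gsym by blast
  show ?thesis unfolding delta_def using dX_local[OF openS0 e xy] dY_local[OF openS0 e xy] by simp
qed

lemma dgsym: "(x,y) \<in> S0 \<Longrightarrow> dY r (gF F i j) x y = dY r (gF F j i) x y"
proof -
  assume xy: "(x,y) \<in> S0"
  have e: "\<forall>x y. (x,y) \<in> S0 \<longrightarrow> gF F i j x y = gF F j i x y" using gsym by blast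
  show ?thesis using dY_local[OF openS0 e xy] .
qed

lemma eul2: "(x,y) \<in> S0 \<Longrightarrow> (\<Sum>j\<in>UNIV. y $ j * dY r (gF F i j) x y) = 0"
proof -
  assume xy: "(x,y) \<in> S0"
  have "(\<Sum>j\<in>UNIV. y $ j * dY r (gF F i j) x y) = (\<Sum>j\<in>UNIV. y $ j * dY r (gF F j i) x y)"
    using dgsym[OF xy] by simp
  also have "\<dots> = 0" by (rule euler2[OF xy])
  finally show ?thesis .
qed

lemma metric_deriv:
  assumes xy: "(\<gamma> s, vd \<gamma> s) \<in> S0"
    and d\<gamma>: "(\<gamma> has_vector_derivative vd \<gamma> s) (at s)"
    and dT: "(vd \<gamma> has_vector_derivative vd (vd \<gamma>) s) (at s)"
    and dU: "\<And>i. ((\<lambda>t. W t $ i) has_real_derivative vd (\<lambda>t. W t $ i) s) (at s)"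
  shows "((\<lambda>t. gform F (\<gamma> t) (vd \<gamma> t) (W t) (vd \<gamma> t)) has_real_derivative
     gform F (\<gamma> s) (vd \<gamma> s) (covD F \<gamma> W s) (vd \<gamma> s) + gform F (\<gamma> s) (vd \<gamma> s) (W s) (covD F \<gamma> (vd \<gamma>) s)) (at s)"
proof -
  let ?x = "\<gamma> s" and ?y = "vd \<gamma> s" and ?a = "vd (vd \<gamma>) s"
  define b where "b r = ?a $ r + 2 * Gs F r ?x ?y" for r
  define conn where "conn V k = (\<Sum>i\<in>UNIV. V i * ((\<Sum>j\<in>UNIV. Gam F k i j ?x ?y * ?y $ j) + (\<Sum>r\<in>UNIV. Cup F k i r ?x ?y * b r)))"
    for V :: "'n \<Rightarrow> real" and k
  define g' where "g' i j = (\<Sum>k\<in>UNIV. dX k (gF F i j) ?x ?y * ?y $ k) + (\<Sum>k\<in>UNIV. dY k (gF F i j) ?x ?y * ?a $ k)" for i j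
  define W' where "W' i = vd (\<lambda>t. W t $ i) s" for i
  have dy: "((\<lambda>t. vd \<gamma> t $ j) has_real_derivative ?a $ j) (at s)" for j by (rule vd_nth_DERIV[OF dT])
  have dg: "((\<lambda>t. gF F i j (\<gamma> t) (vd \<gamma> t)) has_real_derivative g' i j) (at s)" for i j
    unfolding g'_def by (rule smf_chain[OF smg xy d\<gamma> dT])
  have D: "((\<lambda>t. gform F (\<gamma> t) (vd \<gamma> t) (W t) (vd \<gamma> t)) has_real_derivative
      (\<Sum>i\<in>UNIV. \<Sum>j\<in>UNIV. g' i j * W s $ i * ?y $ j + gF F i j ?x ?y * W' i * ?y $ j + gF F i j ?x ?y * W s $ i * ?a $ j)) (at s)"
    unfolding gform_def
  proof (intro DERIV_sum)
    fix i j
    show "((\<lambda>t. gF F i j (\<gamma> t) (vd \<gamma> t) * W t $ i * vd \<gamma> t $ j) has_real_derivative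
        g' i j * W s $ i * ?y $ j + gF F i j ?x ?y * W' i * ?y $ j + gF F i j ?x ?y * W s $ i * ?a $ j) (at s)"
      by (rule DERIV_cong[OF DERIV_mult'[OF DERIV_mult'[OF dg dU] dy]]) (simp add: W'_def algebra_simps)
  qed
  have cW: "covD F \<gamma> W s $ k = W' k + conn (\<lambda>i. W s $ i) k" for k
    unfolding covD_def conn_def W'_def b_def by simp
  have cT: "covD F \<gamma> (vd \<gamma>) s $ k = ?a $ k + conn (\<lambda>i. ?y $ i) k" for k
    unfolding covD_def conn_def b_def using vd_nth[OF dT, of k] by simp
  have alg: "(\<Sum>i\<in>UNIV. \<Sum>j\<in>UNIV. gF F i j ?x ?y * conn (\<lambda>i. W s $ i) i * ?y $ j)
      + (\<Sum>i\<in>UNIV. \<Sum>j\<in>UNIV. gF F i j ?x ?y * W s $ i * conn (\<lambda>i. ?y $ i) j)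
    = (\<Sum>i\<in>UNIV. \<Sum>j\<in>UNIV. ((\<Sum>k\<in>UNIV. dX k (gF F i j) ?x ?y * ?y $ k) + (\<Sum>k\<in>UNIV. dY k (gF F i j) ?x ?y * ?a $ k)) * W s $ i * ?y $ j)"
  proof (rule conn_algebra[where g="\<lambda>i j. gF F i j ?x ?y" and gi="\<lambda>i j. ginv F i j ?x ?y"
        and dl="\<lambda>m i j. delta F m (gF F i j) ?x ?y" and dg="\<lambda>r i j. dY r (gF F i j) ?x ?y"
        and dx="\<lambda>m i j. dX m (gF F i j) ?x ?y" and Gn="\<lambda>r m. Gn F r m ?x ?y"
        and y="\<lambda>i. ?y $ i" and a="\<lambda>i. ?a $ i" and b=b and U="\<lambda>i. W s $ i"
        and \<Gamma>="\<lambda>k i j. Gam F k i j ?x ?y" and Cu="\<lambda>k i r. Cup F k i r ?x ?y" and conn=conn])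
    show "\<And>i j. gF F i j ?x ?y = gF F j i ?x ?y" by (rule gsym[OF xy])
    show "\<And>j l. (\<Sum>k\<in>UNIV. gF F j k ?x ?y * ginv F k l ?x ?y) = (if j = l then 1 else 0)"
      by (rule inv_contract[OF xy])
    show "\<And>m i j. delta F m (gF F i j) ?x ?y = delta F m (gF F j i) ?x ?y" by (rule dlsym[OF xy])
    show "\<And>r i j. dY r (gF F i j) ?x ?y = dY r (gF F j i) ?x ?y" by (rule dgsym[OF xy])
    show "\<And>m i j. delta F m (gF F i j) ?x ?y = dX m (gF F i j) ?x ?y - (\<Sum>r\<in>UNIV. Gn F r m ?x ?y * dY r (gF F i j) ?x ?y)"
      by (simp add: delta_def)
    show "\<And>r i. (\<Sum>j\<in>UNIV. ?y $ j * dY r (gF F i j) ?x ?y) = 0" by (rule eul2[OF xy])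
    show "\<And>k i j. Gam F k i j ?x ?y = 1/2 * (\<Sum>l\<in>UNIV. ginv F k l ?x ?y * (delta F i (gF F j l) ?x ?y + delta F j (gF F i l) ?x ?y - delta F l (gF F i j) ?x ?y))"
      by (simp add: Gam_def)
    show "\<And>k i r. Cup F k i r ?x ?y = (\<Sum>q\<in>UNIV. ginv F k q ?x ?y * (1/2 * dY r (gF F q i) ?x ?y))"
      by (simp add: Cup_def Clow_def)
    show "\<And>V k. conn V k = (\<Sum>i\<in>UNIV. V i * ((\<Sum>j\<in>UNIV. Gam F k i j ?x ?y * ?y $ j) + (\<Sum>r\<in>UNIV. Cup F k i r ?x ?y * b r)))"
      by (simp add: conn_def)
  qed
  have R: "gform F ?x ?y (covD F \<gamma> W s) ?y + gform F ?x ?y (W s) (covD F \<gamma> (vd \<gamma>) s)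
     = (\<Sum>i\<in>UNIV. \<Sum>j\<in>UNIV. g' i j * W s $ i * ?y $ j + gF F i j ?x ?y * W' i * ?y $ j + gF F i j ?x ?y * W s $ i * ?a $ j)"
  proof -
    have "gform F ?x ?y (covD F \<gamma> W s) ?y + gform F ?x ?y (W s) (covD F \<gamma> (vd \<gamma>) s)
      = (\<Sum>i\<in>UNIV. \<Sum>j\<in>UNIV. gF F i j ?x ?y * W' i * ?y $ j + gF F i j ?x ?y * W s $ i * ?a $ j)
        + ((\<Sum>i\<in>UNIV. \<Sum>j\<in>UNIV. gF F i j ?x ?y * conn (\<lambda>i. W s $ i) i * ?y $ j)
          + (\<Sum>i\<in>UNIV. \<Sum>j\<in>UNIV. gF F i j ?x ?y * W s $ i * conn (\<lambda>i. ?y $ i) j))"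
      unfolding gform_def cW cT by (simp add: sum.distrib algebra_simps)
    also have "\<dots> = (\<Sum>i\<in>UNIV. \<Sum>j\<in>UNIV. gF F i j ?x ?y * W' i * ?y $ j + gF F i j ?x ?y * W s $ i * ?a $ j)
        + (\<Sum>i\<in>UNIV. \<Sum>j\<in>UNIV. g' i j * W s $ i * ?y $ j)"
      unfolding alg g'_def ..
    also have "\<dots> = (\<Sum>i\<in>UNIV. \<Sum>j\<in>UNIV. g' i j * W s $ i * ?y $ j + gF F i j ?x ?y * W' i * ?y $ j + gF F i j ?x ?y * W s $ i * ?a $ j)"
      by (simp add: sum.distrib algebra_simps)
    finally show ?thesis .
  qed
  show ?thesis unfolding R by (rule D)
qed

end

context FC
begin

lemma gform_sym: "(x,y) \<in> S0 \<Longrightarrow> gform F x y V W = gform F x y W V"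
proof -
  assume xy: "(x,y) \<in> S0"
  have "gform F x y V W = (\<Sum>j\<in>UNIV. \<Sum>i\<in>UNIV. gF F i j x y * V $ i * W $ j)"
    unfolding gform_def by (rule sum.swap)
  also have "\<dots> = gform F x y W V" unfolding gform_def
    by (rule sum.cong[OF refl], rule sum.cong[OF refl]) (simp add: gsym[OF xy] mult_ac)
  finally show ?thesis .
qed

lemma gform_scale: "gform F x y (c *\<^sub>R V) W = c * gform F x y V W"
  unfolding gform_def by (simp add: sum_distrib_left mult_ac)

end

theorem proposition3p1:
  fixes U :: "(real^'n::finite) set" and F :: "'n fin"
    and I :: "real set" and \<gamma> :: "real \<Rightarrow> real^'n" and \<tau> :: "real \<Rightarrow> real"
  assumes "finsler_chart U F"
    and "smooth_curve I \<gamma>" and "\<gamma> ` I \<subseteq> U"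
    and "\<forall>s\<in>I. F (\<gamma> s) (vd \<gamma> s) = 1"
    and "\<forall>k. \<forall>s\<in>I. (deriv ^^ k) \<tau> differentiable (at s)"
    and "\<forall>s\<in>I. covD F \<gamma> (covD F \<gamma> (vd \<gamma>)) s + \<tau> s *\<^sub>R vd \<gamma> s = 0"
  shows "\<forall>s\<in>I. \<tau> s = gform F (\<gamma> s) (vd \<gamma> s) (covD F \<gamma> (vd \<gamma>) s) (covD F \<gamma> (vd \<gamma>) s)"
proof -
  interpret FC U F using assms(1) by unfold_locales
  have I: "open I" using assms(2) unfolding smooth_curve_def by simp
  have diffk: "\<And>k s. s \<in> I \<Longrightarrow> (vd ^^ k) \<gamma> differentiable (at s)"
    using assms(2) unfolding smooth_curve_def by blast
  have d\<gamma>: "(\<gamma> has_vector_derivative vd \<gamma> s) (at s)" if "s \<in> I" for s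
    using diffk[OF that, of 0] unfolding vd_def by (simp add: vector_derivative_works)
  have dT: "(vd \<gamma> has_vector_derivative vd (vd \<gamma>) s) (at s)" if "s \<in> I" for s
    using diffk[OF that, of 1] unfolding vd_def[of "vd \<gamma>"] by (simp add: vector_derivative_works)
  have dA: "(vd (vd \<gamma>) has_vector_derivative vd (vd (vd \<gamma>)) s) (at s)" if "s \<in> I" for s
    using diffk[OF that, of 2] unfolding vd_def[of "vd (vd \<gamma>)"] by (simp add: vector_derivative_works numeral_2_eq_2)
  have xy: "(\<gamma> s, vd \<gamma> s) \<in> S0" if "s \<in> I" for s
  proof -
    have "\<gamma> s \<in> U" using assms(3) that by auto
    moreover have "vd \<gamma> s \<noteq> 0"
    proof
      assume "vd \<gamma> s = 0"
      then have "F (\<gamma> s) (vd \<gamma> s) = 0" using F0[OF \<open>\<gamma> s \<in> U\<close>] by simp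
      then show False using assms(4) that by simp
    qed
    ultimately show ?thesis by simp
  qed
  have h1: "gform F (\<gamma> t) (vd \<gamma> t) (vd \<gamma> t) (vd \<gamma> t) = 1" if "t \<in> I" for t
  proof -
    have "gform F (\<gamma> t) (vd \<gamma> t) (vd \<gamma> t) (vd \<gamma> t) = Fsq F (\<gamma> t) (vd \<gamma> t)"
      unfolding gform_def by (rule gyy[OF xy[OF that]])
    also have "\<dots> = 1" using assms(4) that by (simp add: Fsq_def)
    finally show ?thesis .
  qed
  have step1: "gform F (\<gamma> s) (vd \<gamma> s) (covD F \<gamma> (vd \<gamma>) s) (vd \<gamma> s) = 0" if s: "s \<in> I" for s
  proof -
    have dU: "((\<lambda>t. vd \<gamma> t $ i) has_real_derivative vd (\<lambda>t. vd \<gamma> t $ i) s) (at s)" for i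
      using vd_nth_DERIV[OF dT[OF s], of i] vd_nth[OF dT[OF s], of i] by simp
    note d1 = metric_deriv[OF xy[OF s] d\<gamma>[OF s] dT[OF s] dU]
    have d0: "((\<lambda>t. gform F (\<gamma> t) (vd \<gamma> t) (vd \<gamma> t) (vd \<gamma> t)) has_real_derivative 0) (at s)"
      by (rule has_field_derivative_transform_within_open[OF DERIV_const I s]) (use h1 in simp)
    have "gform F (\<gamma> s) (vd \<gamma> s) (covD F \<gamma> (vd \<gamma>) s) (vd \<gamma> s) + gform F (\<gamma> s) (vd \<gamma> s) (vd \<gamma> s) (covD F \<gamma> (vd \<gamma>) s) = 0"
      using DERIV_unique[OF d1 d0] .
    then show ?thesis using gform_sym[OF xy[OF s]] by simp
  qed
  show ?thesis
  proof
    fix s assume s: "s \<in> I"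
    define E where "E k t = vd (vd \<gamma>) t $ k + (\<Sum>i\<in>UNIV. vd \<gamma> t $ i *
        ((\<Sum>j\<in>UNIV. Gam F k i j (\<gamma> t) (vd \<gamma> t) * vd \<gamma> t $ j) +
         (\<Sum>r\<in>UNIV. Cup F k i r (\<gamma> t) (vd \<gamma> t) * (vd (vd \<gamma>) t $ r + 2 * Gs F r (\<gamma> t) (vd \<gamma> t)))))" for k t
    have DE: "covD F \<gamma> (vd \<gamma>) t $ k = E k t" if "t \<in> I" for k t
      unfolding covD_def E_def using vd_nth[OF dT[OF that], of k] by simp
    have sm_d: "(\<lambda>t. h (\<gamma> t) (vd \<gamma> t)) differentiable (at s)" if "smf S0 h" for h
      using smf_chain[OF that xy[OF s] d\<gamma>[OF s] dT[OF s]] real_differentiable_def by blast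
    have c1: "(\<lambda>t. vd \<gamma> t $ i) differentiable (at s)" for i
      using vd_nth_DERIV[OF dT[OF s], of i] real_differentiable_def by blast
    have c2: "(\<lambda>t. vd (vd \<gamma>) t $ i) differentiable (at s)" for i
      using vd_nth_DERIV[OF dA[OF s], of i] real_differentiable_def by blast
    have Ed: "E k differentiable (at s)" for k
      unfolding E_def[abs_def]
      by (intro differentiable_add differentiable_sum differentiable_mult differentiable_const
            c1 c2 sm_d smGam smCup smGs ballI) simp_all
    have dU: "((\<lambda>t. covD F \<gamma> (vd \<gamma>) t $ k) has_real_derivative vd (\<lambda>t. covD F \<gamma> (vd \<gamma>) t $ k) s) (at s)" for k
    proof -
      obtain D where D: "(E k has_real_derivative D) (at s)"
        using Ed[of k] real_differentiable_def by blast
      have D': "((\<lambda>t. covD F \<gamma> (vd \<gamma>) t $ k) has_real_derivative D) (at s)"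
        by (rule has_field_derivative_transform_within_open[OF D I s]) (simp add: DE)
      then show ?thesis using vd_real[OF D'] by simp
    qed
    note d2 = metric_deriv[OF xy[OF s] d\<gamma>[OF s] dT[OF s] dU]
    have d0: "((\<lambda>t. gform F (\<gamma> t) (vd \<gamma> t) (covD F \<gamma> (vd \<gamma>) t) (vd \<gamma> t)) has_real_derivative 0) (at s)"
      by (rule has_field_derivative_transform_within_open[OF DERIV_const I s]) (use step1 in simp)
    have sum0: "gform F (\<gamma> s) (vd \<gamma> s) (covD F \<gamma> (covD F \<gamma> (vd \<gamma>)) s) (vd \<gamma> s)
        + gform F (\<gamma> s) (vd \<gamma> s) (covD F \<gamma> (vd \<gamma>) s) (covD F \<gamma> (vd \<gamma>) s) = 0"
      using DERIV_unique[OF d2 d0] .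
    have eqD: "covD F \<gamma> (covD F \<gamma> (vd \<gamma>)) s = (- \<tau> s) *\<^sub>R vd \<gamma> s"
      using assms(6) s by (simp add: eq_neg_iff_add_eq_0[symmetric])
    have "gform F (\<gamma> s) (vd \<gamma> s) (covD F \<gamma> (covD F \<gamma> (vd \<gamma>)) s) (vd \<gamma> s) = - \<tau> s"
      unfolding eqD gform_scale h1[OF s] by simp
    then show "\<tau> s = gform F (\<gamma> s) (vd \<gamma> s) (covD F \<gamma> (vd \<gamma>) s) (covD F \<gamma> (vd \<gamma>) s)"
      using sum0 by simp
  qed
qed

end
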